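(* Let $n\in\mathbb N$ and let $a,b_1,\dots,b_n,c_1,\dots,c_n$ be complex numbers with $\operatorname{Re}(a)>\operatorname{Re}(b_1+\dots+b_n)>0$ and $\operatorname{Re}(c_k)>\operatorname{Re}(b_k)>0$ for $k=1,\dots,n$. Then, as the positive reals $y_1,\dots,y_n$ all tend to $0$, $$\lim_{y_1,\dots,y_n\to 0}\Big\{y_1^{-b_1}\cdots y_n^{-b_n}\,F_A^{(n)}\Big[a,b_1,\dots,b_n;c_1,\dots,c_n;1-\tfrac{1}{y_1},\dots,1-\tfrac{1}{y_n}\Big]\Big\}=\frac{\Gamma(a-b_1-\dots-b_n)}{\Gamma(a)}\prod_{k=1}^{n}\frac{\Gamma(c_k)}{\Gamma(c_k-b_k)}.$$
   Context: $F_A^{(n)}$ is Lauricella's hypergeometric function $F_A^{(n)}[a,b_1,\dots,b_n;c_1,\dots,c_n;y_1,\dots,y_n]=\sum_{m_1,\dots,m_n=0}^\infty\frac{(a)_{m_1+\dots+m_n}(b_1)_{m_1}\cdots(b_n)_{m_n}}{(c_1)_{m_1}\cdots(c_n)_{m_n}}\frac{y_1^{m_1}}{m_1!}\cdots\frac{y_n^{m_n}}{m_n!}$ (with $c_k\ne0,-1,-2,\dots$), understood for the arguments in question via its analytic continuation; $(\lambda)_p$ is the Pochhammer symbol. *)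

theory Defs
  imports "HOL-Complex_Analysis.Complex_Analysis"
begin

text \<open>Lauricella's F_A as a power series, indexed by a finite type 'n
  (the index set {1..n}); multi-indices are all functions m :: 'n \<Rightarrow> nat.\<close>

definition FA_term :: "complex \<Rightarrow> complex^'n::finite \<Rightarrow> complex^'n \<Rightarrow> complex^'n \<Rightarrow> ('n \<Rightarrow> nat) \<Rightarrow> complex" where
  "FA_term a b c y m =
     pochhammer a (\<Sum>k\<in>UNIV. m k) *
     (\<Prod>k\<in>UNIV. pochhammer (b$k) (m k) / pochhammer (c$k) (m k) * (y$k) ^ (m k) / fact (m k))"

definition FA_series :: "complex \<Rightarrow> complex^'n::finite \<Rightarrow> complex^'n \<Rightarrow> complex^'n \<Rightarrow> complex" where
  "FA_series a b c y = (\<Sum>\<^sub>\<infinity>m\<in>UNIV. FA_term a b c y m)"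

text \<open>Analytic continuation of F_A to the point y, taken along the complex line
  z \<mapsto> z*y through the origin: the value at z = 1 of the (unique, by the identity
  theorem) holomorphic function on a connected open set containing the segment [0,1]
  which agrees with the series z \<mapsto> F_A(z y) near z = 0.\<close>

definition LauricellaFA :: "complex \<Rightarrow> complex^'n::finite \<Rightarrow> complex^'n \<Rightarrow> complex^'n \<Rightarrow> complex" where
  "LauricellaFA a b c y =
     (THE w. \<exists>g S e. open S \<and> connected S \<and> closed_segment 0 1 \<subseteq> S \<and>
        g holomorphic_on S \<and> e > 0 \<and> ball 0 e \<subseteq> S \<and>
        (\<forall>z\<in>ball 0 e. g z = FA_series a b c (\<chi> k. z * y$k)) \<and> w = g 1)"

end

theory Submission
  imports Defs "HOL-Real_Asymp.Real_Asymp"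
begin

lemma set_integral_dominated_at_within:
  fixes s :: "'a::first_countable_topology \<Rightarrow> real \<Rightarrow> 'b::{banach,second_countable_topology}"
  assumes meas: "\<And>z. z \<in> T \<Longrightarrow> set_borel_measurable lborel A (s z)"
    and w: "set_integrable lborel A w"
    and bound: "\<And>z t. z \<in> T \<Longrightarrow> t \<in> A \<Longrightarrow> norm (s z t) \<le> w t"
    and lim: "\<And>t. t \<in> A \<Longrightarrow> ((\<lambda>z. s z t) \<longlongrightarrow> f t) (at x within T)"
  shows "((\<lambda>z. LINT t:A|lborel. s z t) \<longlongrightarrow> (LINT t:A|lborel. f t)) (at x within T)"
  unfolding tendsto_at_iff_sequentially
proof (intro allI impI)
  fix X assume X: "\<forall>i. X i \<in> T - {x}" and Xx: "X \<longlonglongrightarrow> x"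
  have limX: "(\<lambda>i. s (X i) t) \<longlonglongrightarrow> f t" if "t \<in> A" for t
    using lim[OF that] X Xx unfolding tendsto_at_iff_sequentially o_def by blast
  have limI: "(\<lambda>i. indicator A t *\<^sub>R s (X i) t) \<longlonglongrightarrow> indicator A t *\<^sub>R f t" for t
    by (cases "t \<in> A") (auto simp: limX)
  have measI: "(\<lambda>t. indicator A t *\<^sub>R s (X i) t) \<in> borel_measurable lborel" for i
    using meas[of "X i"] X unfolding set_borel_measurable_def by auto
  have fmeas: "(\<lambda>t. indicator A t *\<^sub>R f t) \<in> borel_measurable lborel"
    by (rule borel_measurable_LIMSEQ_metric[OF measI limI])
  have "(\<lambda>i. integral\<^sup>L lborel (\<lambda>t. indicator A t *\<^sub>R s (X i) t)) \<longlonglongrightarrow>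
        integral\<^sup>L lborel (\<lambda>t. indicator A t *\<^sub>R f t)"
  proof (rule integral_dominated_convergence[OF fmeas measI])
    show "integrable lborel (\<lambda>t. indicator A t *\<^sub>R w t)"
      using w unfolding set_integrable_def .
    show "AE t in lborel. (\<lambda>i. indicator A t *\<^sub>R s (X i) t) \<longlonglongrightarrow> indicator A t *\<^sub>R f t"
      using limI by auto
    fix i
    show "AE t in lborel. norm (indicator A t *\<^sub>R s (X i) t) \<le> indicator A t *\<^sub>R w t"
      using bound[of "X i"] X by (auto simp: indicator_def)
  qed
  then show "((\<lambda>z. LINT t:A|lborel. s z t) \<circ> X) \<longlonglongrightarrow> (LINT t:A|lborel. f t)"
    by (simp add: set_lebesgue_integral_def o_def)
qed

lemma holomorphic_on_set_integral:
  fixes f :: "complex \<Rightarrow> real \<Rightarrow> complex"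
  assumes S: "open S"
    and hol: "\<And>t. t \<in> A \<Longrightarrow> (\<lambda>z. f z t) holomorphic_on S"
    and meas: "\<And>z. z \<in> S \<Longrightarrow> set_borel_measurable lborel A (f z)"
    and bound: "\<And>z t. z \<in> S \<Longrightarrow> t \<in> A \<Longrightarrow> norm (f z t) \<le> h t"
    and h: "set_integrable lborel A h"
  shows "(\<lambda>z. LINT t:A|lborel. f z t) holomorphic_on S"
proof -
  have "\<exists>F'. ((\<lambda>z. LINT t:A|lborel. f z t) has_field_derivative F') (at z0)" if z0: "z0 \<in> S" for z0
  proof -
    obtain e where e: "e > 0" "cball z0 e \<subseteq> S" using open_contains_cball S z0 by blast
    define r where "r = e / 2"
    have r: "r > 0" "cball z0 (2*r) \<subseteq> S" using e by (auto simp: r_def)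
    have hnn: "h t \<ge> 0" if "t \<in> A" for t
      using bound[OF z0 that] norm_ge_zero order_trans by blast
    have deriv_bound: "norm (deriv (\<lambda>z. f z t) z) \<le> h t / r" if t: "t \<in> A" and z: "z \<in> ball z0 r" for t z
    proof -
      have sub: "cball z r \<subseteq> S"
      proof
        fix w assume "w \<in> cball z r"
        hence "dist z0 w \<le> 2 * r" using z dist_triangle[of z0 w z] by (auto simp: dist_commute)
        thus "w \<in> S" using r by auto
      qed
      have "norm ((deriv ^^ 1) (\<lambda>z. f z t) z) \<le> fact 1 * h t / r ^ 1"
      proof (rule Cauchy_inequality)
        show "(\<lambda>z. f z t) holomorphic_on ball z r"
          using hol[OF t] sub ball_subset_cball holomorphic_on_subset by blast
        show "continuous_on (cball z r) (\<lambda>z. f z t)"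
          using hol[OF t] sub holomorphic_on_imp_continuous_on holomorphic_on_subset by blast
        show "0 < r" by fact
        fix x assume "norm (z - x) = r"
        hence "x \<in> S" using sub by (auto simp: dist_norm)
        thus "norm (f x t) \<le> h t" using bound t by blast
      qed
      thus ?thesis by simp
    qed
    have diff_bound: "norm (f z t - f z0 t) \<le> h t / r * norm (z - z0)" if t: "t \<in> A" and z: "z \<in> ball z0 r" for t z
    proof (rule field_differentiable_bound[of "ball z0 r" "\<lambda>z. f z t" "\<lambda>z. deriv (\<lambda>z. f z t) z"])
      show "convex (ball z0 r)" by simp
      fix w assume w: "w \<in> ball z0 r"
      have "ball z0 r \<subseteq> S" using r ball_subset_cball[of z0 r] cball_subset_cball_iff[of z0 r z0 "2*r"] by auto
      with w show "((\<lambda>z. f z t) has_field_derivative deriv (\<lambda>z. f z t) w) (at w within ball z0 r)"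
        using hol[OF t] S by (intro holomorphic_derivI) auto
      show "norm (deriv (\<lambda>z. f z t) w) \<le> h t / r" using deriv_bound[OF t w] .
    qed (use z r in auto)
    define D where "D z t = (f z t - f z0 t) / (z - z0)" for z t
    define d where "d t = deriv (\<lambda>z. f z t) z0" for t
    have D_bound: "norm (D z t) \<le> h t / r" if "z \<in> ball z0 r" "t \<in> A" for z t
    proof (cases "z = z0")
      case True thus ?thesis using hnn[OF that(2)] r by (simp add: D_def)
    next
      case False
      have "norm (D z t) = norm (f z t - f z0 t) / norm (z - z0)" by (simp add: D_def norm_divide)
      also have "\<dots> \<le> h t / r * norm (z - z0) / norm (z - z0)"
        using diff_bound[OF that(2,1)] by (intro divide_right_mono) auto
      also have "\<dots> = h t / r" using False by simp
      finally show ?thesis .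
    qed
    have D_lim: "((\<lambda>z. D z t) \<longlongrightarrow> d t) (at z0 within ball z0 r)" if t: "t \<in> A" for t
    proof -
      have "((\<lambda>z. f z t) has_field_derivative d t) (at z0 within ball z0 r)"
        unfolding d_def using hol[OF t] S z0 by (intro holomorphic_derivI) auto
      thus ?thesis unfolding has_field_derivative_iff D_def .
    qed
    have D_meas: "set_borel_measurable lborel A (D z)" if z: "z \<in> S" for z
    proof -
      have "(\<lambda>t. indicator A t *\<^sub>R D z t) = (\<lambda>t. (indicator A t *\<^sub>R f z t - indicator A t *\<^sub>R f z0 t) / (z - z0))"
        by (auto simp: D_def indicator_def fun_eq_iff)
      moreover have "(\<lambda>t. (indicator A t *\<^sub>R f z t - indicator A t *\<^sub>R f z0 t) / (z - z0)) \<in> borel_measurable lborel"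
        using meas[OF z] meas[OF z0] unfolding set_borel_measurable_def by measurable
      ultimately show ?thesis unfolding set_borel_measurable_def by simp
    qed
    have int_lim: "((\<lambda>z. LINT t:A|lborel. D z t) \<longlongrightarrow> (LINT t:A|lborel. d t)) (at z0 within ball z0 r)"
    proof (rule set_integral_dominated_at_within[where w = "\<lambda>t. h t / r"])
      show "set_borel_measurable lborel A (D z)" if "z \<in> ball z0 r" for z
      proof -
        have "dist z0 z \<le> 2 * r" using that r by auto
        hence "z \<in> S" using r by auto
        thus ?thesis by (rule D_meas)
      qed
      show "set_integrable lborel A (\<lambda>t. h t / r)" using h by simp
      show "norm (D z t) \<le> h t / r" if "z \<in> ball z0 r" "t \<in> A" for z t using D_bound that by blast
      show "((\<lambda>z. D z t) \<longlongrightarrow> d t) (at z0 within ball z0 r)" if "t \<in> A" for t using D_lim that by blast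
    qed
    have fint: "set_integrable lborel A (f z)" if "z \<in> S" for z
      by (rule set_integrable_bound[OF h meas[OF that]]) (use bound[OF that] hnn in auto)
    have eq: "(LINT t:A|lborel. f z t) - (LINT t:A|lborel. f z0 t) = (LINT t:A|lborel. D z t) * (z - z0)"
      if "z \<in> ball z0 r" "z \<noteq> z0" for z
    proof -
      have zS: "z \<in> S" using that r ball_subset_cball[of z0 r] cball_subset_cball_iff[of z0 r z0 "2*r"] by auto
      have "(LINT t:A|lborel. D z t) * (z - z0) = (LINT t:A|lborel. D z t * (z - z0))"
        by simp
      also have "\<dots> = (LINT t:A|lborel. f z t - f z0 t)"
        using that unfolding set_lebesgue_integral_def
        by (intro Bochner_Integration.integral_cong) (auto simp: D_def indicator_def)
      also have "\<dots> = (LINT t:A|lborel. f z t) - (LINT t:A|lborel. f z0 t)"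
        using fint[OF zS] fint[OF z0] by simp
      finally show ?thesis by simp
    qed
    have "((\<lambda>z. ((LINT t:A|lborel. f z t) - (LINT t:A|lborel. f z0 t)) / (z - z0)) \<longlongrightarrow> (LINT t:A|lborel. d t)) (at z0 within ball z0 r)"
    proof (rule Lim_transform_within[OF int_lim, of r])
      show "0 < r" by fact
      fix z assume "z \<in> ball z0 r" "0 < dist z z0" "dist z z0 < r"
      thus "(LINT t:A|lborel. D z t) = ((LINT t:A|lborel. f z t) - (LINT t:A|lborel. f z0 t)) / (z - z0)"
        using eq[of z] by auto
    qed
    hence "((\<lambda>z. LINT t:A|lborel. f z t) has_field_derivative (LINT t:A|lborel. d t)) (at z0 within ball z0 r)"
      unfolding has_field_derivative_iff .
    hence "((\<lambda>z. LINT t:A|lborel. f z t) has_field_derivative (LINT t:A|lborel. d t)) (at z0)"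
      using r by (subst (asm) at_within_open) auto
    thus ?thesis by blast
  qed
  thus ?thesis using holomorphic_on_open[OF S] by auto
qed

lemma set_integral_has_sum_bij:
  fixes f :: "'i \<Rightarrow> real \<Rightarrow> complex" and e :: "nat \<Rightarrow> 'i"
  assumes e: "bij_betw e UNIV UNIV"
    and int: "\<And>i. set_integrable lborel A (f i)"
    and summ: "(\<lambda>i. LINT t:A|lborel. norm (f i t)) summable_on UNIV"
    and ptw: "\<And>t. t \<in> A \<Longrightarrow> ((\<lambda>i. f i t) has_sum F t) UNIV"
  shows "set_integrable lborel A F"
    and "((\<lambda>i. LINT t:A|lborel. f i t) has_sum (LINT t:A|lborel. F t)) UNIV"
proof -
  define g where "g = (\<lambda>n t. indicator A t *\<^sub>R f (e n) t)"
  have gi: "integrable lborel (g n)" for n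
    using int[of "e n"] unfolding set_integrable_def g_def .
  have ptw_n: "((\<lambda>n. f (e n) t) has_sum F t) UNIV" if "t \<in> A" for t
    using ptw[OF that] has_sum_reindex_bij_betw[OF e, of "\<lambda>i. f i t"] by simp
  have abs_n: "summable (\<lambda>n. norm (f (e n) t))" if "t \<in> A" for t
  proof -
    have "(\<lambda>n. f (e n) t) summable_on UNIV" using ptw_n[OF that] by (auto simp: summable_on_def)
    hence "(\<lambda>n. norm (f (e n) t)) summable_on UNIV"
      using summable_on_iff_abs_summable_on_complex[of "\<lambda>n. f (e n) t" UNIV] by simp
    thus ?thesis by (rule summable_on_imp_summable)
  qed
  have sum_g: "summable (\<lambda>n. norm (g n t))" for t
    using abs_n[of t] by (cases "t \<in> A") (auto simp: g_def)
  have normg: "(\<integral>t. norm (g n t) \<partial>lborel) = (LINT t:A|lborel. norm (f (e n) t))" for n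
    unfolding set_lebesgue_integral_def g_def
    by (intro Bochner_Integration.integral_cong) (auto simp: indicator_def)
  have summ_n: "summable (\<lambda>n. \<integral>t. norm (g n t) \<partial>lborel)"
  proof -
    have "(\<lambda>n. LINT t:A|lborel. norm (f (e n) t)) summable_on UNIV"
      using summ summable_on_reindex_bij_betw[OF e, of "\<lambda>i. LINT t:A|lborel. norm (f i t)"] by simp
    hence "summable (\<lambda>n. LINT t:A|lborel. norm (f (e n) t))" by (rule summable_on_imp_summable)
    thus ?thesis by (simp add: normg)
  qed
  have gsum: "(\<Sum>n. g n t) = indicator A t *\<^sub>R F t" for t
  proof (cases "t \<in> A")
    case True
    have "(\<lambda>n. f (e n) t) sums F t" using ptw_n[OF True] by (rule has_sum_imp_sums)
    thus ?thesis using True by (simp add: g_def sums_iff)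
  qed (simp add: g_def)
  note R = integrable_suminf[OF gi _ summ_n] sums_integral[OF gi _ summ_n]
  from R(1) show "set_integrable lborel A F"
    using sum_g by (simp add: gsum set_integrable_def)
  have sums: "(\<lambda>n. LINT t:A|lborel. f (e n) t) sums (LINT t:A|lborel. F t)"
  proof -
    have a: "(\<integral>t. (\<Sum>n. g n t) \<partial>lborel) = (LINT t:A|lborel. F t)"
      by (simp add: gsum set_lebesgue_integral_def)
    have b: "(\<lambda>n. integral\<^sup>L lborel (g n)) = (\<lambda>n. LINT t:A|lborel. f (e n) t)"
      by (simp add: g_def set_lebesgue_integral_def fun_eq_iff)
    show ?thesis using R(2) sum_g unfolding a b by simp
  qed
  have "summable (\<lambda>n. norm (LINT t:A|lborel. f (e n) t))"
  proof (rule summable_comparison_test[OF _ summ_n])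
    show "\<exists>N. \<forall>n\<ge>N. norm (norm (LINT t:A|lborel. f (e n) t)) \<le> (\<integral>t. norm (g n t) \<partial>lborel)"
    proof (intro exI[of _ 0] allI impI)
      fix n :: nat
      have "(LINT t:A|lborel. f (e n) t) = integral\<^sup>L lborel (g n)"
        by (simp add: set_lebesgue_integral_def g_def)
      thus "norm (norm (LINT t:A|lborel. f (e n) t)) \<le> (\<integral>t. norm (g n t) \<partial>lborel)"
        using integral_norm_bound[of lborel "g n"] by simp
    qed
  qed
  from norm_summable_imp_has_sum[OF this sums]
  show "((\<lambda>i. LINT t:A|lborel. f i t) has_sum (LINT t:A|lborel. F t)) UNIV"
    using has_sum_reindex_bij_betw[OF e, of "\<lambda>i. LINT t:A|lborel. f i t"] by simp
qed

lemma holomorphic_on_localI: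
  assumes "open S" "\<And>z. z \<in> S \<Longrightarrow> \<exists>T. open T \<and> z \<in> T \<and> f holomorphic_on T"
  shows "f holomorphic_on S"
  unfolding holomorphic_on_open[OF assms(1)]
proof
  fix z assume "z \<in> S"
  then obtain T where "open T" "z \<in> T" "f holomorphic_on T" using assms(2) by blast
  thus "\<exists>f'. (f has_field_derivative f') (at z)" using holomorphic_on_open by blast
qed

lemma Re_pos_not_nonpos_Ints: "Re z > 0 \<Longrightarrow> z \<notin> \<int>\<^sub>\<le>\<^sub>0"
  by (auto elim!: nonpos_Ints_cases)

lemma nonpos_Ints_Re_le: "z \<in> \<int>\<^sub>\<le>\<^sub>0 \<Longrightarrow> Re z \<le> 0"
  by (auto elim!: nonpos_Ints_cases)

definition bkern :: "complex \<Rightarrow> complex \<Rightarrow> real \<Rightarrow> complex" where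
  "bkern p q t = of_real t powr (p - 1) * of_real (1 - t) powr (q - 1)"

lemma norm_bkern:
  assumes "t \<in> {0<..<1}"
  shows "norm (bkern p q t) = t powr (Re p - 1) * (1 - t) powr (Re q - 1)"
  using assms by (simp add: bkern_def norm_mult norm_powr_real_powr)

lemma bkern_measurable [measurable]: "bkern p q \<in> borel_measurable borel"
  unfolding bkern_def by measurable

lemma set_borel_measurable_bkern: "set_borel_measurable lborel {0<..<1} (bkern p q)"
  unfolding set_borel_measurable_def by measurable

lemma bkern_real_integrable:
  assumes "a > 0" "b > (0::real)"
  shows "set_integrable lborel {0<..<1} (\<lambda>t. t powr (a - 1) * (1 - t) powr (b - 1))"
  by (rule set_integrable_subset[OF integrable_Beta[OF assms]]) auto

lemma bkern_integrable:
  assumes "Re p > 0" "Re q > 0"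
  shows "set_integrable lborel {0<..<1} (bkern p q)"
  by (rule set_integrable_bound[OF bkern_real_integrable[OF assms] set_borel_measurable_bkern])
     (auto simp: norm_bkern)

lemma bkern_real_integral:
  assumes "a > 0" "b > (0::real)"
  shows "(LINT t:{0<..<1}|lborel. bkern (of_real a) (of_real b) t) = of_real (Beta a b)"
proof -
  have "(LINT t:{0<..<1}|lborel. bkern (of_real a) (of_real b) t) =
        (LINT t:{0<..<1}|lborel. complex_of_real (t powr (a - 1) * (1 - t) powr (b - 1)))"
    unfolding set_lebesgue_integral_def
    by (intro Bochner_Integration.integral_cong)
       (auto simp: indicator_def bkern_def powr_of_real[symmetric])
  also have "\<dots> = of_real (LINT t:{0<..<1}|lborel. t powr (a - 1) * (1 - t) powr (b - 1))"
    by (rule set_integral_complex_of_real)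
  also have "(LINT t:{0<..<1}|lborel. t powr (a - 1) * (1 - t) powr (b - 1)) =
             integral {0<..<1} (\<lambda>t. t powr (a - 1) * (1 - t) powr (b - 1))"
    by (rule set_borel_integral_eq_integral(2)[OF bkern_real_integrable[OF assms]])
  also have "\<dots> = Beta a b"
    using has_integral_Beta_real[OF assms] by (simp add: has_integral_Icc_iff_Ioo integral_unique)
  finally show ?thesis .
qed

lemma bkern_mono:
  assumes "t \<in> {0<..<1}" "Re p \<ge> s" "Re q \<ge> u"
  shows "norm (bkern p q t) \<le> t powr (s - 1) * (1 - t) powr (u - 1)"
  using assms by (auto simp: norm_bkern intro!: mult_mono powr_mono')

lemma bkern_holo_p:
  assumes "Re q > 0"
  shows "(\<lambda>p. LINT t:{0<..<1}|lborel. bkern p q t) holomorphic_on {p. Re p > 0}"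
proof (rule holomorphic_on_localI)
  show "open {p. Re p > 0}" by (rule open_halfspace_Re_gt)
  fix p0 assume p0: "p0 \<in> {p. Re p > 0}"
  define T where "T = {p. Re p > Re p0 / 2}"
  have "(\<lambda>p. LINT t:{0<..<1}|lborel. bkern p q t) holomorphic_on T"
  proof (rule holomorphic_on_set_integral[where h = "\<lambda>t. t powr (Re p0 / 2 - 1) * (1 - t) powr (Re q - 1)"])
    show "open T" unfolding T_def by (rule open_halfspace_Re_gt)
    show "(\<lambda>p. bkern p q t) holomorphic_on T" if "t \<in> {0<..<1}" for t
      unfolding bkern_def by (intro holomorphic_intros)
    show "set_borel_measurable lborel {0<..<1} (bkern p q)" for p by (rule set_borel_measurable_bkern)
    show "norm (bkern p q t) \<le> t powr (Re p0 / 2 - 1) * (1 - t) powr (Re q - 1)"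
      if "p \<in> T" "t \<in> {0<..<1}" for p t using that by (intro bkern_mono) (auto simp: T_def)
    show "set_integrable lborel {0<..<1} (\<lambda>t. t powr (Re p0 / 2 - 1) * (1 - t) powr (Re q - 1))"
      using p0 assms by (intro bkern_real_integrable) auto
  qed
  moreover have "open T" unfolding T_def by (rule open_halfspace_Re_gt)
  moreover have "p0 \<in> T" using p0 by (auto simp: T_def)
  ultimately show "\<exists>T. open T \<and> p0 \<in> T \<and> (\<lambda>p. LINT t:{0<..<1}|lborel. bkern p q t) holomorphic_on T"
    by blast
qed

lemma bkern_holo_q:
  assumes "Re p > 0"
  shows "(\<lambda>q. LINT t:{0<..<1}|lborel. bkern p q t) holomorphic_on {q. Re q > 0}"
proof (rule holomorphic_on_localI)
  show "open {q. Re q > 0}" by (rule open_halfspace_Re_gt)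
  fix q0 assume q0: "q0 \<in> {q. Re q > 0}"
  define T where "T = {q. Re q > Re q0 / 2}"
  have "(\<lambda>q. LINT t:{0<..<1}|lborel. bkern p q t) holomorphic_on T"
  proof (rule holomorphic_on_set_integral[where h = "\<lambda>t. t powr (Re p - 1) * (1 - t) powr (Re q0 / 2 - 1)"])
    show "open T" unfolding T_def by (rule open_halfspace_Re_gt)
    show "(\<lambda>q. bkern p q t) holomorphic_on T" if "t \<in> {0<..<1}" for t
      unfolding bkern_def by (intro holomorphic_intros)
    show "set_borel_measurable lborel {0<..<1} (bkern p q)" for q by (rule set_borel_measurable_bkern)
    show "norm (bkern p q t) \<le> t powr (Re p - 1) * (1 - t) powr (Re q0 / 2 - 1)"
      if "q \<in> T" "t \<in> {0<..<1}" for q t using that by (intro bkern_mono) (auto simp: T_def)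
    show "set_integrable lborel {0<..<1} (\<lambda>t. t powr (Re p - 1) * (1 - t) powr (Re q0 / 2 - 1))"
      using q0 assms by (intro bkern_real_integrable) auto
  qed
  moreover have "open T" unfolding T_def by (rule open_halfspace_Re_gt)
  moreover have "q0 \<in> T" using q0 by (auto simp: T_def)
  ultimately show "\<exists>T. open T \<and> q0 \<in> T \<and> (\<lambda>q. LINT t:{0<..<1}|lborel. bkern p q t) holomorphic_on T"
    by blast
qed

lemma one_islimpt_pos_reals: "(1::complex) islimpt {z. z \<in> \<real> \<and> Re z > 0}"
  unfolding islimpt_approachable
proof (intro allI impI)
  fix e :: real assume e: "e > 0"
  define x where "x = complex_of_real (1 + min e 1 / 2)"
  have "x \<in> {z. z \<in> \<real> \<and> Re z > 0}" "x \<noteq> 1" "dist x 1 < e"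
    using e by (auto simp: x_def dist_norm)
  thus "\<exists>x'\<in>{z. z \<in> \<real> \<and> Re z > 0}. x' \<noteq> 1 \<and> dist x' 1 < e" by blast
qed

lemma beta_integral_complex:
  assumes p: "Re p > 0" and q: "Re q > 0"
  shows "(LINT t:{0<..<1}|lborel. bkern p q t) = Beta p q"
proof -
  have conn: "connected {z::complex. Re z > 0}"
    by (rule convex_connected[OF convex_halfspace_Re_gt])
  have op: "open {z::complex. Re z > 0}" by (rule open_halfspace_Re_gt)
  have sub: "{z. z \<in> \<real> \<and> Re z > 0} \<subseteq> {p::complex. Re p > 0}" by auto
  have one: "1 \<in> {p::complex. Re p > 0}" by simp
  have step1: "(LINT t:{0<..<1}|lborel. bkern p' (of_real b) t) = Beta p' (of_real b)"
    if b: "b > 0" and p': "Re p' > 0" for b p'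
  proof -
    have h: "(\<lambda>p. (LINT t:{0<..<1}|lborel. bkern p (of_real b) t) - Beta p (of_real b)) holomorphic_on {p. Re p > 0}"
      using b by (intro holomorphic_intros bkern_holo_p) (auto dest: nonpos_Ints_Re_le)
    have z: "(LINT t:{0<..<1}|lborel. bkern z (of_real b) t) - Beta z (of_real b) = 0"
      if "z \<in> {z. z \<in> \<real> \<and> Re z > 0}" for z
    proof -
      from that obtain a where a: "z = of_real a" "a > 0" by (auto elim!: Reals_cases)
      show ?thesis using a b by (simp add: bkern_real_integral Beta_complex_of_real)
    qed
    have "(\<lambda>p. (LINT t:{0<..<1}|lborel. bkern p (of_real b) t) - Beta p (of_real b)) p' = 0"
      by (rule analytic_continuation[OF h op conn sub one one_islimpt_pos_reals z]) (use p' in auto)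
    thus ?thesis by simp
  qed
  have h: "(\<lambda>q. (LINT t:{0<..<1}|lborel. bkern p q t) - Beta p q) holomorphic_on {q. Re q > 0}"
    using p by (intro holomorphic_intros bkern_holo_q) (auto dest: nonpos_Ints_Re_le)
  have z: "(LINT t:{0<..<1}|lborel. bkern p z t) - Beta p z = 0"
    if "z \<in> {z. z \<in> \<real> \<and> Re z > 0}" for z
  proof -
    from that obtain b where b: "z = of_real b" "b > 0" by (auto elim!: Reals_cases)
    show ?thesis using step1[OF b(2) p] b by simp
  qed
  have "(\<lambda>q. (LINT t:{0<..<1}|lborel. bkern p q t) - Beta p q) q = 0"
    by (rule analytic_continuation[OF h op conn sub one one_islimpt_pos_reals z]) (use q in auto)
  thus ?thesis by simp
qed

lemma real_beta_set_integral:
  assumes "a > 0" "b > (0::real)"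
  shows "(LINT t:{0<..<1}|lborel. t powr (a - 1) * (1 - t) powr (b - 1)) = Beta a b"
proof -
  have "(LINT t:{0<..<1}|lborel. t powr (a - 1) * (1 - t) powr (b - 1)) =
             integral {0<..<1} (\<lambda>t. t powr (a - 1) * (1 - t) powr (b - 1))"
    by (rule set_borel_integral_eq_integral(2)[OF bkern_real_integrable[OF assms]])
  also have "\<dots> = Beta a b"
    using has_integral_Beta_real[OF assms] by (simp add: has_integral_Icc_iff_Ioo integral_unique)
  finally show ?thesis .
qed

definition Phi :: "complex \<Rightarrow> complex \<Rightarrow> complex \<Rightarrow> complex" where
  "Phi b q w = (LINT t:{0<..<1}|lborel. exp (w * of_real t) * bkern b q t)"

lemma norm_exp_le: "t \<in> {0<..<1} \<Longrightarrow> norm (exp (w * of_real t)) \<le> exp (max 0 (Re w))"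
proof -
  assume t: "t \<in> {0<..<1}"
  have "Re w * t \<le> max 0 (Re w)"
  proof (cases "Re w \<ge> 0")
    case True thus ?thesis using t mult_left_le[of t "Re w"] by auto
  next
    case False thus ?thesis using t by (auto simp: mult_nonpos_nonneg)
  qed
  thus ?thesis by simp
qed

lemma set_borel_measurable_Phi_integrand:
  "set_borel_measurable lborel {0<..<1} (\<lambda>t. exp (w * of_real t) * bkern b q t)"
  unfolding set_borel_measurable_def by measurable

lemma Phi_integrable:
  assumes "Re b > 0" "Re q > 0"
  shows "set_integrable lborel {0<..<1} (\<lambda>t. exp (w * of_real t) * bkern b q t)"
proof (rule set_integrable_bound[OF _ set_borel_measurable_Phi_integrand])
  show "set_integrable lborel {0<..<1} (\<lambda>t. exp (max 0 (Re w)) * (t powr (Re b - 1) * (1 - t) powr (Re q - 1)))"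
    using bkern_real_integrable[OF assms] by simp
  show "AE t in lborel. t \<in> {0<..<1} \<longrightarrow> norm (exp (w * of_real t) * bkern b q t)
          \<le> norm (exp (max 0 (Re w)) * (t powr (Re b - 1) * (1 - t) powr (Re q - 1)))"
  proof (intro AE_I2 impI)
    fix t :: real assume t: "t \<in> {0<..<1}"
    have "norm (exp (w * of_real t) * bkern b q t) \<le> exp (max 0 (Re w)) * (t powr (Re b - 1) * (1 - t) powr (Re q - 1))"
      unfolding norm_mult norm_bkern[OF t] using norm_exp_le[OF t] by (intro mult_right_mono) auto
    thus "norm (exp (w * of_real t) * bkern b q t) \<le> norm (exp (max 0 (Re w)) * (t powr (Re b - 1) * (1 - t) powr (Re q - 1)))"
      by simp
  qed
qed

lemma Phi_bound:
  assumes "Re b > 0" "Re q > 0"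
  shows "norm (Phi b q w) \<le> exp (max 0 (Re w)) * Beta (Re b) (Re q)"
proof -
  have "norm (Phi b q w) \<le> (LINT t:{0<..<1}|lborel. norm (exp (w * of_real t) * bkern b q t))"
    unfolding Phi_def by (rule set_integral_norm_bound[OF Phi_integrable[OF assms]])
  also have "\<dots> \<le> (LINT t:{0<..<1}|lborel. exp (max 0 (Re w)) * (t powr (Re b - 1) * (1 - t) powr (Re q - 1)))"
  proof (rule set_integral_mono)
    show "set_integrable lborel {0<..<1} (\<lambda>t. norm (exp (w * of_real t) * bkern b q t))"
      using Phi_integrable[OF assms] by (rule set_integrable_norm)
    show "set_integrable lborel {0<..<1} (\<lambda>t. exp (max 0 (Re w)) * (t powr (Re b - 1) * (1 - t) powr (Re q - 1)))"
      using bkern_real_integrable[OF assms] by simp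
    fix t :: real assume t: "t \<in> {0<..<1}"
    show "norm (exp (w * of_real t) * bkern b q t) \<le> exp (max 0 (Re w)) * (t powr (Re b - 1) * (1 - t) powr (Re q - 1))"
      unfolding norm_mult norm_bkern[OF t] using norm_exp_le[OF t] by (intro mult_right_mono) auto
  qed
  also have "\<dots> = exp (max 0 (Re w)) * Beta (Re b) (Re q)"
    using assms by (simp add: real_beta_set_integral)
  finally show ?thesis .
qed

lemma Gamma_nz: "Re z > 0 \<Longrightarrow> Gamma z \<noteq> 0"
  by (intro Gamma_nonzero Re_pos_not_nonpos_Ints)

lemma Beta_nz: "Re b > 0 \<Longrightarrow> Re q > 0 \<Longrightarrow> Beta b q \<noteq> 0"
  by (simp add: Beta_def Gamma_nz)

lemma Beta_shift:
  assumes "Re b > 0" "Re q > 0"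
  shows "Beta (b + of_nat j) q = Beta b q * pochhammer b j / pochhammer (b + q) j"
proof -
  have g: "Gamma b \<noteq> 0" "Gamma q \<noteq> 0" "Gamma (b + q) \<noteq> 0" "Gamma (b + of_nat j) \<noteq> 0"
    "Gamma (b + q + of_nat j) \<noteq> 0"
    using assms by (auto intro!: Gamma_nz)
  have p1: "pochhammer b j = Gamma (b + of_nat j) / Gamma b"
    using assms by (intro pochhammer_Gamma Re_pos_not_nonpos_Ints)
  have p2: "pochhammer (b + q) j = Gamma (b + q + of_nat j) / Gamma (b + q)"
    using assms by (intro pochhammer_Gamma Re_pos_not_nonpos_Ints) auto
  have e: "b + of_nat j + q = b + q + of_nat j" by simp
  show ?thesis unfolding p1 p2 Beta_def e using g
    by (simp add: field_simps)
qed

lemma Phi_holomorphic: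
  assumes "Re b > 0" "Re q > 0"
  shows "Phi b q holomorphic_on UNIV"
proof (rule holomorphic_on_localI)
  fix w0 :: complex
  define R where "R = norm w0 + 1"
  have "(\<lambda>w. LINT t:{0<..<1}|lborel. exp (w * of_real t) * bkern b q t) holomorphic_on ball 0 R"
  proof (rule holomorphic_on_set_integral[where h = "\<lambda>t. exp R * (t powr (Re b - 1) * (1 - t) powr (Re q - 1))"])
    show "(\<lambda>w. exp (w * of_real t) * bkern b q t) holomorphic_on ball 0 R" for t
      by (intro holomorphic_intros)
    show "set_borel_measurable lborel {0<..<1} (\<lambda>t. exp (w * of_real t) * bkern b q t)" for w
      by (rule set_borel_measurable_Phi_integrand)
    show "set_integrable lborel {0<..<1} (\<lambda>t. exp R * (t powr (Re b - 1) * (1 - t) powr (Re q - 1)))"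
      using bkern_real_integrable[OF assms] by simp
    fix w :: complex and t :: real assume w: "w \<in> ball 0 R" and t: "t \<in> {0<..<1}"
    have "max 0 (Re w) \<le> R" using w abs_Re_le_cmod[of w] by (auto simp: R_def)
    hence "norm (exp (w * of_real t)) \<le> exp R" using norm_exp_le[OF t, of w] by (meson exp_le_cancel_iff order_trans)
    thus "norm (exp (w * of_real t) * bkern b q t) \<le> exp R * (t powr (Re b - 1) * (1 - t) powr (Re q - 1))"
      unfolding norm_mult norm_bkern[OF t] by (intro mult_right_mono) auto
  qed auto
  moreover have "w0 \<in> ball 0 R" by (simp add: R_def)
  ultimately show "\<exists>T. open T \<and> w0 \<in> T \<and> Phi b q holomorphic_on T"
    unfolding Phi_def[abs_def] by (intro exI[of _ "ball 0 R"]) auto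
qed auto

lemma bkern_shift:
  assumes "t \<in> {0<..<1}"
  shows "of_real t ^ j * bkern b q t = bkern (b + of_nat j) q t"
proof -
  have t: "t > 0" using assms by auto
  have "of_real t powr (b + of_nat j - 1) = of_real t powr (b - 1) * (of_real t powr of_nat j :: complex)"
    by (subst powr_add[symmetric]) (simp add: algebra_simps)
  also have "(of_real t powr of_nat j :: complex) = of_real t ^ j" using t by (simp add: powr_nat)
  finally show ?thesis by (simp add: bkern_def mult_ac)
qed

lemma Phi_has_sum:
  assumes b: "Re b > 0" and q: "Re q > 0"
  shows "((\<lambda>j. w ^ j / fact j * Beta (b + of_nat j) q) has_sum Phi b q w) UNIV"
proof -
  define f where "f = (\<lambda>j t. (w * of_real t) ^ j / fact j * bkern b q t)"
  have bj: "bj > 0" if "bj = Re b + real j" for bj j using that b by simp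
  have feq: "f j t = w ^ j / fact j * bkern (b + of_nat j) q t" if t: "t \<in> {0<..<1}" for j t
  proof -
    have "f j t = w ^ j / fact j * (of_real t ^ j * bkern b q t)"
      by (simp add: f_def power_mult_distrib mult_ac)
    also have "of_real t ^ j * bkern b q t = bkern (b + of_nat j) q t" by (rule bkern_shift[OF t])
    finally show ?thesis .
  qed
  have fint: "set_integrable lborel {0<..<1} (f j)" for j
  proof -
    have "set_integrable lborel {0<..<1} (\<lambda>t. w ^ j / fact j * bkern (b + of_nat j) q t)"
      using b q by (intro set_integrable_mult_right bkern_integrable) auto
    moreover have "set_integrable lborel {0<..<1} (f j) = set_integrable lborel {0<..<1} (\<lambda>t. w ^ j / fact j * bkern (b + of_nat j) q t)"
      by (intro set_integrable_cong refl) (simp add: feq)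
    ultimately show ?thesis by simp
  qed
  have fint_eq: "(LINT t:{0<..<1}|lborel. f j t) = w ^ j / fact j * Beta (b + of_nat j) q" for j
  proof -
    have "(LINT t:{0<..<1}|lborel. f j t) = (LINT t:{0<..<1}|lborel. w ^ j / fact j * bkern (b + of_nat j) q t)"
      by (intro set_lebesgue_integral_cong) (simp_all add: feq)
    also have "\<dots> = w ^ j / fact j * Beta (b + of_nat j) q"
      using b q by (simp add: beta_integral_complex)
    finally show ?thesis .
  qed
  have fnorm: "(LINT t:{0<..<1}|lborel. norm (f j t)) \<le> norm w ^ j / fact j * Beta (Re b) (Re q)" for j
  proof -
    have "(LINT t:{0<..<1}|lborel. norm (f j t)) \<le>
          (LINT t:{0<..<1}|lborel. norm w ^ j / fact j * (t powr (Re b - 1) * (1 - t) powr (Re q - 1)))"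
    proof (rule set_integral_mono)
      show "set_integrable lborel {0<..<1} (\<lambda>t. norm (f j t))" by (rule set_integrable_norm[OF fint])
      show "set_integrable lborel {0<..<1} (\<lambda>t. norm w ^ j / fact j * (t powr (Re b - 1) * (1 - t) powr (Re q - 1)))"
        using bkern_real_integrable[OF b q] by simp
      fix t :: real assume t: "t \<in> {0<..<1}"
      have "t ^ j \<le> 1" using t by (intro power_le_one) auto
      hence "norm w ^ j * t ^ j \<le> norm w ^ j" by (intro mult_left_le) auto
      hence "norm w ^ j * t ^ j / fact j * (t powr (Re b - 1) * (1 - t) powr (Re q - 1))
            \<le> norm w ^ j / fact j * (t powr (Re b - 1) * (1 - t) powr (Re q - 1))"
        by (intro mult_right_mono divide_right_mono) auto
      thus "norm (f j t) \<le> norm w ^ j / fact j * (t powr (Re b - 1) * (1 - t) powr (Re q - 1))"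
        using t by (simp add: f_def norm_mult norm_divide norm_power norm_bkern[OF t] power_mult_distrib)
    qed
    also have "\<dots> = norm w ^ j / fact j * Beta (Re b) (Re q)"
      using b q by (simp add: real_beta_set_integral)
    finally show ?thesis .
  qed
  have summ: "(\<lambda>j. LINT t:{0<..<1}|lborel. norm (f j t)) summable_on UNIV"
  proof -
    have "summable (\<lambda>j. LINT t:{0<..<1}|lborel. norm (f j t))"
    proof (rule summable_comparison_test[OF _ summable_mult2[OF summable_exp[of "norm w"], of "Beta (Re b) (Re q)"]])
      show "\<exists>N. \<forall>n\<ge>N. norm (LINT t:{0<..<1}|lborel. norm (f n t)) \<le> inverse (fact n) * norm w ^ n * Beta (Re b) (Re q)"
      proof (intro exI[of _ 0] allI impI)
        fix n :: nat
        have "0 \<le> (LINT t:{0<..<1}|lborel. norm (f n t))"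
          unfolding set_lebesgue_integral_def by (intro Bochner_Integration.integral_nonneg) auto
        thus "norm (LINT t:{0<..<1}|lborel. norm (f n t)) \<le> inverse (fact n) * norm w ^ n * Beta (Re b) (Re q)"
          using fnorm[of n] by (simp add: field_simps)
      qed
    qed
    moreover have "\<And>j. (LINT t:{0<..<1}|lborel. norm (f j t)) \<ge> 0"
      unfolding set_lebesgue_integral_def by (intro Bochner_Integration.integral_nonneg) auto
    ultimately show ?thesis by (subst summable_on_UNIV_nonneg_real_iff)
  qed
  have ptw: "((\<lambda>j. f j t) has_sum (exp (w * of_real t) * bkern b q t)) UNIV" if "t \<in> {0<..<1}" for t
  proof (rule norm_summable_imp_has_sum)
    have "(\<lambda>j. (w * of_real t) ^ j /\<^sub>R fact j * bkern b q t) sums (exp (w * of_real t) * bkern b q t)"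
      by (intro sums_mult2 exp_converges)
    thus "(\<lambda>j. f j t) sums (exp (w * of_real t) * bkern b q t)"
      by (simp add: f_def scaleR_conv_of_real divide_inverse mult_ac)
    have "summable (\<lambda>j. norm ((w * of_real t) ^ j /\<^sub>R fact j) * norm (bkern b q t))"
      by (intro summable_mult2 summable_norm_exp)
    thus "summable (\<lambda>j. norm (f j t))"
      by (simp add: f_def norm_mult norm_divide norm_power divide_inverse mult_ac norm_inverse)
  qed
  have "((\<lambda>j. LINT t:{0<..<1}|lborel. f j t) has_sum (LINT t:{0<..<1}|lborel. exp (w * of_real t) * bkern b q t)) UNIV"
    by (rule set_integral_has_sum_bij(2)[of id, OF _ fint summ ptw]) auto
  thus ?thesis unfolding fint_eq Phi_def .
qed

lemma Gamma_set_integrable_lborel: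
  assumes "Re b > 0"
  shows "set_integrable lborel {0<..} (\<lambda>t. of_real t powr (b - 1) / of_real (exp t) :: complex)"
proof -
  have "set_integrable lebesgue {0<..} (\<lambda>t. of_real t powr (b - 1) / of_real (exp t) :: complex)"
    using absolutely_integrable_Gamma_integral'[OF assms] .
  thus ?thesis unfolding set_integrable_def
    by (subst (asm) integrable_completion) measurable
qed

lemma Gamma_set_integral_lborel:
  assumes "Re b > 0"
  shows "(LINT t:{0<..}|lborel. of_real t powr (b - 1) / of_real (exp t) :: complex) = Gamma b"
proof -
  have "(LINT t:{0<..}|lborel. of_real t powr (b - 1) / of_real (exp t) :: complex) =
        integral {0<..} (\<lambda>t. of_real t powr (b - 1) / of_real (exp t) :: complex)"
    by (rule set_borel_integral_eq_integral(2)[OF Gamma_set_integrable_lborel[OF assms]])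
  also have "\<dots> = Gamma b" using Gamma_integral_complex'[OF assms] by (rule integral_unique)
  finally show ?thesis .
qed

lemma Gamma_scaled:
  assumes b: "Re b > 0" and l: "l > (0::real)"
  shows "set_integrable lborel {0<..} (\<lambda>u. of_real u powr (b - 1) / of_real (exp (l * u)) :: complex)"
    and "(LINT u:{0<..}|lborel. of_real u powr (b - 1) / of_real (exp (l * u)) :: complex) = Gamma b / of_real l powr b"
proof -
  define G where "G = (\<lambda>t. indicator {0<..} t *\<^sub>R (of_real t powr (b - 1) / of_real (exp t) :: complex))"
  have Gi: "integrable lborel G" using Gamma_set_integrable_lborel[OF b] unfolding G_def set_integrable_def .
  have GI: "integral\<^sup>L lborel G = Gamma b" using Gamma_set_integral_lborel[OF b] unfolding G_def set_lebesgue_integral_def .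
  have Geq: "G (0 + l * u) = of_real l powr (b - 1) * (indicator {0<..} u *\<^sub>R (of_real u powr (b - 1) / of_real (exp (l * u))))" for u
  proof (cases "u > 0")
    case True
    have "(of_real (l * u) :: complex) powr (b - 1) = of_real l powr (b - 1) * of_real u powr (b - 1)"
      using True l by (subst of_real_mult, subst powr_times_real) auto
    thus ?thesis using True l by (simp add: G_def indicator_def)
  next
    case False thus ?thesis using l by (simp add: G_def indicator_def zero_less_mult_iff)
  qed
  have lnz: "(of_real l powr (b - 1) :: complex) \<noteq> 0" using l by simp
  have i2: "integrable lborel (\<lambda>u. G (0 + l * u))" using Gi l by (intro lborel_integrable_real_affine) auto
  hence "integrable lborel (\<lambda>u. inverse (of_real l powr (b - 1)) * G (0 + l * u))"
    by (rule Bochner_Integration.integrable_mult_right)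
  also have "(\<lambda>u. inverse (of_real l powr (b - 1)) * G (0 + l * u)) =
     (\<lambda>u. indicator {0<..} u *\<^sub>R (of_real u powr (b - 1) / of_real (exp (l * u)) :: complex))"
    unfolding Geq using lnz by (simp add: fun_eq_iff)
  finally have i3: "integrable lborel (\<lambda>u. indicator {0<..} u *\<^sub>R (of_real u powr (b - 1) / of_real (exp (l * u)) :: complex))" .
  thus "set_integrable lborel {0<..} (\<lambda>u. of_real u powr (b - 1) / of_real (exp (l * u)) :: complex)"
    unfolding set_integrable_def .
  have "Gamma b = \<bar>l\<bar> *\<^sub>R (\<integral>u. G (0 + l * u) \<partial>lborel)"
    using GI lborel_integral_real_affine[of l G 0] l by simp
  also have "\<dots> = of_real l * of_real l powr (b - 1) * (LINT u:{0<..}|lborel. of_real u powr (b - 1) / of_real (exp (l * u)))"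
    unfolding Geq set_lebesgue_integral_def integral_mult_right_zero using l by (simp add: scaleR_conv_of_real)
  also have "of_real l * of_real l powr (b - 1) = (of_real l powr b :: complex)"
    using l by (simp add: powr_diff)
  finally show "(LINT u:{0<..}|lborel. of_real u powr (b - 1) / of_real (exp (l * u)) :: complex) = Gamma b / of_real l powr b"
    using l by (simp add: field_simps)
qed

definition Phi1 :: "complex \<Rightarrow> complex \<Rightarrow> complex \<Rightarrow> complex" where
  "Phi1 b q w = (LINT t:{0<..1/2}|lborel. exp (w * of_real t) * bkern b q t)"

definition Phi2 :: "complex \<Rightarrow> complex \<Rightarrow> complex \<Rightarrow> complex" where
  "Phi2 b q w = (LINT t:{1/2<..<1}|lborel. exp (w * of_real t) * bkern b q t)"

lemma Phi_split:
  assumes "Re b > 0" "Re q > 0"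
  shows "Phi b q w = Phi1 b q w + Phi2 b q w"
proof -
  have i: "set_integrable lborel {0<..<1} (\<lambda>t. exp (w * of_real t) * bkern b q t)"
    by (rule Phi_integrable[OF assms])
  have "{0<..<1} = {0<..1/2} \<union> {1/2<..<(1::real)}" by auto
  hence "Phi b q w = (LINT t:({0<..1/2} \<union> {1/2<..<1})|lborel. exp (w * of_real t) * bkern b q t)"
    by (simp add: Phi_def)
  also have "\<dots> = Phi1 b q w + Phi2 b q w"
    unfolding Phi1_def Phi2_def
    by (rule set_integral_Un) (auto intro: set_integrable_subset[OF i])
  finally show ?thesis .
qed

lemma powr_half_bound:
  assumes "x \<in> {1/2..1::real}"
  shows "x powr e \<le> max 1 ((1/2) powr e)"
proof (cases "e \<ge> 0")
  case True
  hence "x powr e \<le> 1 powr e" using assms by (intro powr_mono2) auto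
  thus ?thesis by simp
next
  case False
  hence "x powr e \<le> (1/2) powr e" using assms by (intro powr_mono2') auto
  thus ?thesis by simp
qed

lemma Phi2_bound:
  assumes b: "Re b > 0" and q: "Re q > 0" and l: "l \<ge> 0"
  shows "norm (Phi2 b q (of_real (- l))) \<le> exp (- l / 2) * Beta (Re b) (Re q)"
proof -
  have i: "set_integrable lborel {1/2<..<1} (\<lambda>t. exp (of_real (-l) * of_real t) * bkern b q t)"
    by (rule set_integrable_subset[OF Phi_integrable[OF b q]]) auto
  have ir: "set_integrable lborel {1/2<..<1} (\<lambda>t. t powr (Re b - 1) * (1 - t) powr (Re q - 1))"
    by (rule set_integrable_subset[OF bkern_real_integrable]) (use b q in auto)
  have "norm (Phi2 b q (of_real (- l))) \<le> (LINT t:{1/2<..<1}|lborel. norm (exp (of_real (-l) * of_real t) * bkern b q t))"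
    unfolding Phi2_def by (rule set_integral_norm_bound[OF i])
  also have "\<dots> \<le> (LINT t:{1/2<..<1}|lborel. exp (- l / 2) * (t powr (Re b - 1) * (1 - t) powr (Re q - 1)))"
  proof (rule set_integral_mono)
    show "set_integrable lborel {1/2<..<1} (\<lambda>t. norm (exp (of_real (-l) * of_real t) * bkern b q t))"
      by (rule set_integrable_norm[OF i])
    show "set_integrable lborel {1/2<..<1} (\<lambda>t. exp (- l / 2) * (t powr (Re b - 1) * (1 - t) powr (Re q - 1)))"
      using ir by simp
    fix t :: real assume t: "t \<in> {1/2<..<1}"
    hence t': "t \<in> {0<..<1}" by auto
    have "l * (1/2) \<le> l * t" using t l by (intro mult_left_mono) auto
    hence "-l * t \<le> -l / 2" by simp
    hence "norm (exp (of_real (-l) * of_real t :: complex)) \<le> exp (-l / 2)"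
      by (simp flip: of_real_mult)
    thus "norm (exp (of_real (-l) * of_real t) * bkern b q t) \<le> exp (- l / 2) * (t powr (Re b - 1) * (1 - t) powr (Re q - 1))"
      unfolding norm_mult norm_bkern[OF t'] by (intro mult_right_mono) auto
  qed
  also have "\<dots> = exp (- l / 2) * (LINT t:{1/2<..<1}|lborel. t powr (Re b - 1) * (1 - t) powr (Re q - 1))"
    by simp
  also have "(LINT t:{1/2<..<1}|lborel. t powr (Re b - 1) * (1 - t) powr (Re q - 1)) \<le>
             (LINT t:{0<..<1}|lborel. t powr (Re b - 1) * (1 - t) powr (Re q - 1))"
  proof -
    have "(LINT t:{0<..<1}|lborel. t powr (Re b - 1) * (1 - t) powr (Re q - 1)) =
          (LINT t:({0<..1/2} \<union> {1/2<..<1})|lborel. t powr (Re b - 1) * (1 - t) powr (Re q - 1))"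
      by (intro arg_cong[where f = "\<lambda>A. set_lebesgue_integral lborel A _"]) auto
    also have "\<dots> = (LINT t:{0<..1/2}|lborel. t powr (Re b - 1) * (1 - t) powr (Re q - 1)) +
                    (LINT t:{1/2<..<1}|lborel. t powr (Re b - 1) * (1 - t) powr (Re q - 1))"
      by (rule set_integral_Un) (auto intro: set_integrable_subset[OF bkern_real_integrable] simp: b q)
    also have "(LINT t:{0<..1/2}|lborel. t powr (Re b - 1) * (1 - t) powr (Re q - 1)) \<ge> 0"
      unfolding set_lebesgue_integral_def by (intro Bochner_Integration.integral_nonneg) (auto simp: indicator_def)
    ultimately show ?thesis by linarith
  qed
  hence "exp (- l / 2) * (LINT t:{1/2<..<1}|lborel. t powr (Re b - 1) * (1 - t) powr (Re q - 1)) \<le>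
         exp (- l / 2) * Beta (Re b) (Re q)"
    using b q by (intro mult_left_mono) (auto simp: real_beta_set_integral)
  finally show ?thesis .
qed

definition kfun :: "complex \<Rightarrow> complex \<Rightarrow> real \<Rightarrow> real \<Rightarrow> real \<Rightarrow> complex" where
  "kfun b q y s u = exp (of_real ((y - 1) * s * u)) * of_real u powr (b - 1) * of_real (1 - y * u) powr (q - 1)"

lemma Phi1_subst:
  assumes y: "y > 0"
  shows "of_real y powr (-b) * Phi1 b q (of_real ((1 - 1/y) * s)) =
         (LINT u:{0<..1/(2*y)}|lborel. kfun b q y s u)"
proof -
  define w where "w = (of_real ((1 - 1/y) * s) :: complex)"
  define I where "I = (\<lambda>t. indicator {0<..1/2} t *\<^sub>R (exp (w * of_real t) * bkern b q t))"
  define J where "J = (\<lambda>u. indicator {0<..1/(2*y)} u *\<^sub>R kfun b q y s u)"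
  have IJ: "I (0 + y * u) = of_real y powr (b - 1) * J u" for u
  proof (cases "u > 0 \<and> u \<le> 1/(2*y)")
    case True
    hence u: "u > 0" "y * u \<le> 1/2" using y by (auto simp: field_simps)
    have ind: "indicator {0<..1/2} (y * u) = (1::real)" "indicator {0<..1/(2*y)} u = (1::real)"
      using u True y by (auto simp: indicator_def)
    have p: "(of_real (y * u) :: complex) powr (b - 1) = of_real y powr (b - 1) * of_real u powr (b - 1)"
      using u y by (subst of_real_mult, subst powr_times_real) auto
    have e: "w * of_real (y * u) = of_real ((y - 1) * s * u)"
      using y by (simp add: w_def field_simps)
    have I1: "I (0 + y * u) = exp (w * of_real (y * u)) * bkern b q (y * u)"
      using ind(1) by (simp add: I_def)
    have J1: "J u = kfun b q y s u" using ind(2) by (simp add: J_def)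
    show ?thesis unfolding I1 J1 e bkern_def kfun_def p by (simp add: mult_ac)
  next
    case False
    hence "indicator {0<..1/2} (y * u) = (0::real)" "indicator {0<..1/(2*y)} u = (0::real)"
      using y by (auto simp: indicator_def field_simps zero_less_mult_iff)
    thus ?thesis unfolding I_def J_def by simp
  qed
  have "Phi1 b q w = integral\<^sup>L lborel I"
    unfolding Phi1_def I_def set_lebesgue_integral_def ..
  also have "\<dots> = \<bar>y\<bar> *\<^sub>R (\<integral>u. I (0 + y * u) \<partial>lborel)"
    using y by (intro lborel_integral_real_affine) auto
  also have "\<dots> = of_real y * (of_real y powr (b - 1) * integral\<^sup>L lborel J)"
    unfolding IJ integral_mult_right_zero using y by (simp add: scaleR_conv_of_real)
  also have "of_real y * (of_real y powr (b - 1) * integral\<^sup>L lborel J) = of_real y powr b * integral\<^sup>L lborel J"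
    using y by (simp add: powr_diff)
  finally have "Phi1 b q w = of_real y powr b * integral\<^sup>L lborel J" .
  hence "of_real y powr (-b) * Phi1 b q w = integral\<^sup>L lborel J"
    using y by (simp add: powr_minus field_simps)
  thus ?thesis unfolding w_def J_def set_lebesgue_integral_def .
qed

lemma kfun_measurable [measurable]: "kfun b q y s \<in> borel_measurable borel"
  unfolding kfun_def by measurable

lemma kfun_bound:
  assumes y: "0 < y" "y \<le> 1/2" and s: "s \<ge> 0" and u: "0 < u" "u \<le> 1/(2*y)"
  shows "norm (kfun b q y s u) \<le> max 1 ((1/2) powr (Re q - 1)) * (u powr (Re b - 1) * exp (- (s/2) * u))"
proof -
  have yu: "y * u \<le> 1/2" using u y by (auto simp: field_simps)
  have "(y - 1) * (s * u) \<le> (-1/2) * (s * u)" using y s u by (intro mult_right_mono) auto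
  hence e: "norm (exp (of_real ((y - 1) * s * u)) :: complex) \<le> exp (- (s/2) * u)" by (simp add: mult_ac)
  have p: "norm (of_real (1 - y * u) powr (q - 1) :: complex) \<le> max 1 ((1/2) powr (Re q - 1))"
    using yu y u by (subst norm_powr_real_powr) (auto intro!: powr_half_bound simp: zero_le_mult_iff)
  have n: "norm (of_real u powr (b - 1) :: complex) = u powr (Re b - 1)"
    using u by (simp add: norm_powr_real_powr)
  have "norm (kfun b q y s u) = norm (exp (of_real ((y - 1) * s * u)) :: complex) * u powr (Re b - 1) *
          norm (of_real (1 - y * u) powr (q - 1) :: complex)"
    by (simp add: kfun_def norm_mult n)
  also have "\<dots> \<le> exp (- (s/2) * u) * u powr (Re b - 1) * max 1 ((1/2) powr (Re q - 1))"
    by (intro mult_mono e p) auto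
  finally show ?thesis by (simp add: mult_ac)
qed

lemma gamma_dom_integrable:
  assumes "Re b > 0" "l > 0"
  shows "set_integrable lborel {0<..} (\<lambda>u. C * (u powr (Re b - 1) * exp (- l * u)))"
proof -
  have "set_integrable lborel {0<..} (\<lambda>u. norm (of_real u powr (b - 1) / of_real (exp (l * u)) :: complex))"
    by (intro set_integrable_norm Gamma_scaled(1) assms)
  also have "?this \<longleftrightarrow> set_integrable lborel {0<..} (\<lambda>u. u powr (Re b - 1) * exp (- l * u))"
    by (intro set_integrable_cong) (auto simp: norm_divide norm_powr_real_powr exp_minus field_simps)
  finally show ?thesis by simp
qed

lemma psi1_lim:
  assumes b: "Re b > 0" and s: "s > 0"
  shows "((\<lambda>y. LINT u:{0<..1/(2*y)}|lborel. kfun b q y s u) \<longlongrightarrow> Gamma b / of_real s powr b)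
           (at 0 within {0<..1/2})"
proof -
  define C where "C = max 1 ((1/2) powr (Re q - 1))"
  define g where "g = (\<lambda>y u. indicator {..1/(2*y)} u *\<^sub>R kfun b q y s u)"
  have eq: "(LINT u:{0<..1/(2*y)}|lborel. kfun b q y s u) = (LINT u:{0<..}|lborel. g y u)" for y
    unfolding set_lebesgue_integral_def g_def
    by (intro Bochner_Integration.integral_cong) (auto simp: indicator_def)
  have "((\<lambda>y. LINT u:{0<..}|lborel. g y u) \<longlongrightarrow>
          (LINT u:{0<..}|lborel. of_real u powr (b - 1) / of_real (exp (s * u)))) (at 0 within {0<..1/2})"
  proof (rule set_integral_dominated_at_within[where w = "\<lambda>u. C * (u powr (Re b - 1) * exp (- (s/2) * u))"])
    show "set_borel_measurable lborel {0<..} (g y)" for y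
      unfolding set_borel_measurable_def g_def by measurable
    show "set_integrable lborel {0<..} (\<lambda>u. C * (u powr (Re b - 1) * exp (- (s/2) * u)))"
      using b s by (intro gamma_dom_integrable) auto
    show "norm (g y u) \<le> C * (u powr (Re b - 1) * exp (- (s/2) * u))" if "y \<in> {0<..1/2}" "u \<in> {0<..}" for y u
    proof (cases "u \<le> 1/(2*y)")
      case True thus ?thesis using kfun_bound[of y s u b q] that s by (auto simp: g_def C_def)
    next
      case False thus ?thesis by (simp add: g_def C_def)
    qed
    show "((\<lambda>y. g y u) \<longlongrightarrow> of_real u powr (b - 1) / of_real (exp (s * u))) (at 0 within {0<..1/2})"
      if u: "u \<in> {0<..}" for u
    proof -
      have ev: "eventually (\<lambda>y. kfun b q y s u = g y u) (at 0 within {0<..1/2})"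
        unfolding eventually_at
      proof (intro exI[of _ "1/(2*u)"] conjI ballI impI)
        show "1/(2*u) > 0" using u by auto
        fix y :: real assume "y \<in> {0<..1/2}" "y \<noteq> 0 \<and> dist y 0 < 1/(2*u)"
        hence "u \<le> 1/(2*y)" using u by (auto simp: field_simps dist_norm)
        thus "kfun b q y s u = g y u" by (simp add: g_def)
      qed
      have "((\<lambda>y. kfun b q y s u) \<longlongrightarrow> kfun b q 0 s u) (at 0 within {0<..1/2})"
        unfolding kfun_def by (intro tendsto_intros) auto
      moreover have "kfun b q 0 s u = of_real u powr (b - 1) / of_real (exp (s * u))"
      proof -
        have "exp (of_real ((0 - 1) * s * u) :: complex) = 1 / of_real (exp (s * u))"
          by (simp add: exp_of_real[symmetric] exp_minus inverse_eq_divide)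
        thus ?thesis by (simp add: kfun_def)
      qed
      ultimately show ?thesis using ev by (simp add: Lim_transform_eventually)
    qed
  qed
  thus ?thesis unfolding eq using Gamma_scaled(2)[OF b s] by simp
qed

definition psi :: "complex \<Rightarrow> complex \<Rightarrow> real \<Rightarrow> real \<Rightarrow> complex" where
  "psi b q y s = of_real y powr (-b) * Phi b q (of_real ((1 - 1/y) * s))"

lemma psi_split:
  assumes b: "Re b > 0" and q: "Re q > 0" and y: "y > 0"
  shows "psi b q y s = (LINT u:{0<..1/(2*y)}|lborel. kfun b q y s u) +
                       of_real y powr (-b) * Phi2 b q (of_real ((1 - 1/y) * s))"
  unfolding psi_def Phi_split[OF b q] distrib_left Phi1_subst[OF y] ..

lemma psi2_bound:
  assumes b: "Re b > 0" and q: "Re q > 0" and y: "y > 0" "y \<le> 1" and s: "s \<ge> 0"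
  shows "norm (of_real y powr (-b) * Phi2 b q (of_real ((1 - 1/y) * s))) \<le>
           y powr (- Re b) * exp (- ((1/y - 1) * s) / 2) * Beta (Re b) (Re q)"
proof -
  have "1/y - 1 \<ge> 0" using y by (simp add: field_simps)
  hence l: "(1/y - 1) * s \<ge> 0" using s by simp
  have "(1 - 1/y) * s = - ((1/y - 1) * s)" by (simp add: algebra_simps)
  hence "norm (Phi2 b q (of_real ((1 - 1/y) * s))) \<le> exp (- ((1/y - 1) * s) / 2) * Beta (Re b) (Re q)"
    using Phi2_bound[OF b q l] by simp
  moreover have "norm (of_real y powr (-b) :: complex) = y powr (- Re b)"
    using y by (simp add: norm_powr_real_powr)
  ultimately show ?thesis unfolding norm_mult mult.assoc
    by (metis mult_left_mono powr_ge_zero)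
qed

lemma psi2_lim:
  assumes b: "Re b > 0" and q: "Re q > 0" and s: "s > 0"
  shows "((\<lambda>y. of_real y powr (-b) * Phi2 b q (of_real ((1 - 1/y) * s))) \<longlongrightarrow> 0) (at 0 within {0<..1/2})"
proof (rule Lim_null_comparison)
  show "eventually (\<lambda>y. norm (of_real y powr (-b) * Phi2 b q (of_real ((1 - 1/y) * s))) \<le>
           y powr (- Re b) * exp (- ((1/y - 1) * s) / 2) * Beta (Re b) (Re q)) (at 0 within {0<..1/2})"
    unfolding eventually_at_filter
    by (intro always_eventually allI impI psi2_bound b q) (use s in auto)
  have "((\<lambda>y. y powr (- Re b) * exp (- ((1/y - 1) * s) / 2) * Beta (Re b) (Re q)) \<longlongrightarrow> 0) (at_right 0)"
    using b s by real_asymp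
  thus "((\<lambda>y. y powr (- Re b) * exp (- ((1/y - 1) * s) / 2) * Beta (Re b) (Re q)) \<longlongrightarrow> 0) (at 0 within {0<..1/2})"
    by (rule tendsto_within_subset) auto
qed

lemma psi_lim:
  assumes b: "Re b > 0" and q: "Re q > 0" and s: "s > 0"
  shows "((\<lambda>y. psi b q y s) \<longlongrightarrow> Gamma b / of_real s powr b) (at 0 within {0<..1/2})"
proof -
  have "((\<lambda>y. (LINT u:{0<..1/(2*y)}|lborel. kfun b q y s u) +
                       of_real y powr (-b) * Phi2 b q (of_real ((1 - 1/y) * s))) \<longlongrightarrow> Gamma b / of_real s powr b + 0)
        (at 0 within {0<..1/2})"
    by (intro tendsto_add psi1_lim psi2_lim b q s)
  moreover have "eventually (\<lambda>y. (LINT u:{0<..1/(2*y)}|lborel. kfun b q y s u) +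
                       of_real y powr (-b) * Phi2 b q (of_real ((1 - 1/y) * s)) = psi b q y s) (at 0 within {0<..1/2})"
    unfolding eventually_at_filter
    by (intro always_eventually allI impI psi_split[symmetric] b q) auto
  ultimately show ?thesis by (simp add: Lim_transform_eventually)
qed

lemma gamma_real_scaled:
  assumes b: "beta > 0" and l: "l > (0::real)"
  shows "(LINT u:{0<..}|lborel. u powr (beta - 1) * exp (- l * u)) = Gamma beta / l powr beta"
proof -
  have "complex_of_real (LINT u:{0<..}|lborel. u powr (beta - 1) * exp (- l * u)) =
        (LINT u:{0<..}|lborel. complex_of_real (u powr (beta - 1) * exp (- l * u)))"
    by (rule set_integral_complex_of_real[symmetric])
  also have "\<dots> = (LINT u:{0<..}|lborel. of_real u powr (of_real beta - 1) / of_real (exp (l * u)))"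
    unfolding set_lebesgue_integral_def
    by (intro Bochner_Integration.integral_cong)
       (auto simp: indicator_def powr_of_real[symmetric] exp_minus field_simps)
  also have "\<dots> = Gamma (of_real beta) / of_real l powr of_real beta"
    using b l by (intro Gamma_scaled(2)) auto
  also have "\<dots> = complex_of_real (Gamma beta / l powr beta)"
    using l by (simp add: Gamma_complex_of_real powr_of_real)
  finally show ?thesis by (subst (asm) of_real_eq_iff)
qed

lemma powr_exp_bound:
  assumes x: "x > 0" and b: "beta > (0::real)"
  shows "x powr beta * exp (- x / 4) \<le> (4 * beta) powr beta"
proof -
  have "x / (4 * beta) \<le> exp (x / (4 * beta))"
    using exp_ge_add_one_self[of "x / (4 * beta)"] by linarith
  hence "(x / (4 * beta)) powr beta \<le> exp (x / (4 * beta)) powr beta"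
    using x b by (intro powr_mono2) auto
  also have "\<dots> = exp (x / 4)" using b by (simp add: powr_def)
  finally have "x powr beta / (4 * beta) powr beta \<le> exp (x / 4)"
    using x b by (simp add: powr_divide)
  hence "x powr beta \<le> (4 * beta) powr beta * exp (x / 4)"
    using b by (simp add: field_simps)
  thus ?thesis by (simp add: exp_minus field_simps)
qed

lemma psi_bound:
  assumes b: "Re b > 0" and q: "Re q > 0"
  obtains K where "K \<ge> 0" "\<And>y s. 0 < y \<Longrightarrow> y \<le> 1/2 \<Longrightarrow> s > 0 \<Longrightarrow> norm (psi b q y s) \<le> K * s powr (- Re b)"
proof -
  define C where "C = max 1 ((1/2) powr (Re q - 1))"
  define K where "K = C * Gamma (Re b) * 2 powr (Re b) + Beta (Re b) (Re q) * (4 * Re b) powr (Re b)"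
  have C: "C \<ge> 0" by (simp add: C_def)
  have "Gamma (Re b) > 0" "Beta (Re b) (Re q) > 0" using b q by (auto intro: Gamma_real_pos simp: Beta_def)
  hence K: "K \<ge> 0" using C by (simp add: K_def)
  have "norm (psi b q y s) \<le> K * s powr (- Re b)" if y: "0 < y" "y \<le> 1/2" and s: "s > 0" for y s
  proof -
    have int: "set_integrable lborel {0<..} (\<lambda>u. C * (u powr (Re b - 1) * exp (- (s/2) * u)))"
      using b s by (intro gamma_dom_integrable) auto
    have "norm (LINT u:{0<..1/(2*y)}|lborel. kfun b q y s u) \<le>
          (LINT u:{0<..}|lborel. C * (u powr (Re b - 1) * exp (- (s/2) * u)))"
    proof -
      define G where "G = (\<lambda>u. indicator {..1/(2*y)} u *\<^sub>R kfun b q y s u)"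
      have eqI: "(LINT u:{0<..1/(2*y)}|lborel. kfun b q y s u) = (LINT u:{0<..}|lborel. G u)"
        unfolding set_lebesgue_integral_def G_def
        by (intro Bochner_Integration.integral_cong) (auto simp: indicator_def)
      have bnd: "norm (G u) \<le> C * (u powr (Re b - 1) * exp (- (s/2) * u))" if "u \<in> {0<..}" for u
        using kfun_bound[of y s u b q] y s C that by (auto simp: indicator_def C_def G_def)
      have iG: "set_integrable lborel {0<..} G"
      proof (rule set_integrable_bound[OF int])
        show "set_borel_measurable lborel {0<..} G"
          unfolding set_borel_measurable_def G_def by measurable
        show "AE u in lborel. u \<in> {0<..} \<longrightarrow> norm (G u) \<le> norm (C * (u powr (Re b - 1) * exp (- (s/2) * u)))"
          using bnd by (intro AE_I2) force
      qed
      have "norm (LINT u:{0<..}|lborel. G u) \<le> (LINT u:{0<..}|lborel. norm (G u))"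
        by (rule set_integral_norm_bound[OF iG])
      also have "\<dots> \<le> (LINT u:{0<..}|lborel. C * (u powr (Re b - 1) * exp (- (s/2) * u)))"
        by (rule set_integral_mono[OF set_integrable_norm[OF iG] int]) (rule bnd)
      finally show ?thesis unfolding eqI .
    qed
    also have "\<dots> = C * (Gamma (Re b) / (s/2) powr (Re b))"
      using gamma_real_scaled[of "Re b" "s/2"] b s by simp
    also have "\<dots> = C * Gamma (Re b) * 2 powr (Re b) * s powr (- Re b)"
      using s by (simp add: powr_divide powr_minus field_simps)
    finally have n1: "norm (LINT u:{0<..1/(2*y)}|lborel. kfun b q y s u) \<le> C * Gamma (Re b) * 2 powr (Re b) * s powr (- Re b)" .
    have n2: "norm (of_real y powr (-b) * Phi2 b q (of_real ((1 - 1/y) * s))) \<le>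
           y powr (- Re b) * exp (- ((1/y - 1) * s) / 2) * Beta (Re b) (Re q)"
      using y s by (intro psi2_bound b q) auto
    have "exp (- ((1/y - 1) * s) / 2) \<le> exp (- (s / y) / 4)"
    proof -
      have "(1/y - 1) \<ge> 1 / (2 * y)" using y by (auto simp: field_simps)
      hence "(1/y - 1) * s \<ge> 1 / (2 * y) * s" using s by (intro mult_right_mono) auto
      thus ?thesis by (simp add: field_simps)
    qed
    hence "y powr (- Re b) * exp (- ((1/y - 1) * s) / 2) \<le> y powr (- Re b) * exp (- (s / y) / 4)"
      by (intro mult_left_mono) auto
    also have "y powr (- Re b) * exp (- (s / y) / 4) = s powr (- Re b) * ((s / y) powr (Re b) * exp (- (s / y) / 4))"
      using y s by (simp add: powr_divide powr_minus field_simps)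
    also have "\<dots> \<le> s powr (- Re b) * (4 * Re b) powr (Re b)"
      using y s b by (intro mult_left_mono powr_exp_bound) auto
    finally have "y powr (- Re b) * exp (- ((1/y - 1) * s) / 2) * Beta (Re b) (Re q) \<le>
                  s powr (- Re b) * (4 * Re b) powr (Re b) * Beta (Re b) (Re q)"
      using \<open>Beta (Re b) (Re q) > 0\<close> by (intro mult_right_mono) auto
    with n2 have n2': "norm (of_real y powr (-b) * Phi2 b q (of_real ((1 - 1/y) * s))) \<le>
                  s powr (- Re b) * (4 * Re b) powr (Re b) * Beta (Re b) (Re q)" by linarith
    have "norm (psi b q y s) \<le> norm (LINT u:{0<..1/(2*y)}|lborel. kfun b q y s u) +
             norm (of_real y powr (-b) * Phi2 b q (of_real ((1 - 1/y) * s)))"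
      unfolding psi_split[OF b q y(1)] by (rule norm_triangle_ineq)
    also have "\<dots> \<le> K * s powr (- Re b)"
      using n1 n2' by (simp add: K_def algebra_simps)
    finally show ?thesis .
  qed
  with K that show ?thesis by blast
qed

lemma LauricellaFA_eqI:
  fixes y :: "complex^'n::finite"
  assumes S: "open S" "connected S" "closed_segment 0 1 \<subseteq> S" and g: "g holomorphic_on S"
    and e: "e > 0" "ball 0 e \<subseteq> S" and eq: "\<forall>z\<in>ball 0 e. g z = FA_series a b c (\<chi> k. z * y$k)"
  shows "LauricellaFA a b c y = g 1"
  unfolding LauricellaFA_def
proof (rule the_equality)
  show "\<exists>g' S' e'. open S' \<and> connected S' \<and> closed_segment 0 1 \<subseteq> S' \<and> g' holomorphic_on S' \<and> e' > 0 \<and>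
          ball 0 e' \<subseteq> S' \<and> (\<forall>z\<in>ball 0 e'. g' z = FA_series a b c (\<chi> k. z * y$k)) \<and> g 1 = g' 1"
    using S g e eq by blast
  fix w assume "\<exists>g' S' e'. open S' \<and> connected S' \<and> closed_segment 0 1 \<subseteq> S' \<and> g' holomorphic_on S' \<and> e' > 0 \<and>
          ball 0 e' \<subseteq> S' \<and> (\<forall>z\<in>ball 0 e'. g' z = FA_series a b c (\<chi> k. z * y$k)) \<and> w = g' 1"
  then obtain g' S' e' where S': "open S'" "connected S'" "closed_segment 0 1 \<subseteq> S'" and g': "g' holomorphic_on S'"
    and e': "e' > 0" "ball 0 e' \<subseteq> S'" and eq': "\<forall>z\<in>ball 0 e'. g' z = FA_series a b c (\<chi> k. z * y$k)"
    and w: "w = g' 1" by blast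
  define U where "U = S \<inter> S'"
  define C where "C = connected_component_set U 0"
  have U: "open U" unfolding U_def using S S' by auto
  have segC: "closed_segment 0 1 \<subseteq> C"
    unfolding C_def by (rule connected_component_maximal) (use S S' in \<open>auto simp: U_def\<close>)
  have ballC: "ball 0 (min e e') \<subseteq> C"
    unfolding C_def by (rule connected_component_maximal) (use e e' in \<open>auto simp: U_def\<close>)
  have CU: "C \<subseteq> U" unfolding C_def by (rule connected_component_subset)
  have "g' 1 = g 1"
  proof (rule analytic_continuation_open[of "ball 0 (min e e')" C g' g 1])
    show "open (ball 0 (min e e'))" by simp
    show "open C" unfolding C_def by (rule open_connected_component[OF U])
    show "ball 0 (min e e') \<noteq> {}" using e e' by simp
    show "connected C" unfolding C_def by (rule connected_connected_component)
    show "ball 0 (min e e') \<subseteq> C" by (rule ballC)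
    show "g' holomorphic_on C" using g' CU by (auto simp: U_def intro: holomorphic_on_subset)
    show "g holomorphic_on C" using g CU by (auto simp: U_def intro: holomorphic_on_subset)
    show "g' z = g z" if "z \<in> ball 0 (min e e')" for z using eq eq' that by auto
    show "1 \<in> C" using segC by auto
  qed
  thus "w = g 1" using w by simp
qed

definition En :: "complex \<Rightarrow> complex \<Rightarrow> complex \<Rightarrow> complex" where
  "En b c w = Phi b (c - b) w / Beta b (c - b)"

lemma En_holo:
  assumes "Re b > 0" "Re c > Re b" "g holomorphic_on S"
  shows "(\<lambda>z. En b c (g z)) holomorphic_on S"
proof -
  have "(Phi b (c - b) \<circ> g) holomorphic_on S"
    using assms Phi_holomorphic[of b "c - b"] by (intro holomorphic_on_compose_gen[of g S "Phi b (c - b)" UNIV]) auto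
  thus ?thesis unfolding En_def o_def by (intro holomorphic_intros) auto
qed

lemma En_continuous:
  assumes "Re b > 0" "Re c > Re b"
  shows "continuous_on UNIV (En b c)"
proof -
  have "En b c holomorphic_on UNIV" using En_holo[OF assms, of "\<lambda>z. z" UNIV] by simp
  thus ?thesis by (rule holomorphic_on_imp_continuous_on)
qed

lemma En_meas [measurable]:
  assumes "Re b > 0" "Re c > Re b"
  shows "(\<lambda>s. En b c (z * of_real (x * s))) \<in> borel_measurable borel"
proof (rule borel_measurable_continuous_onI)
  show "continuous_on UNIV (\<lambda>s. En b c (z * of_real (x * s)))"
    by (rule continuous_on_compose2[OF En_continuous[OF assms]]) (auto intro!: continuous_intros)
qed

definition Lc :: "complex \<Rightarrow> complex \<Rightarrow> real" where
  "Lc b c = Beta (Re b) (Re (c - b)) / norm (Beta b (c - b))"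

lemma Lc_nonneg: "Re b > 0 \<Longrightarrow> Re c > Re b \<Longrightarrow> Lc b c \<ge> 0"
  by (auto simp: Lc_def Beta_def intro!: divide_nonneg_nonneg mult_nonneg_nonneg less_imp_le[OF Gamma_real_pos])

lemma En_bound:
  assumes "Re b > 0" "Re c > Re b"
  shows "norm (En b c w) \<le> exp (max 0 (Re w)) * Lc b c"
  using Phi_bound[of b "c - b" w] assms
  by (simp add: En_def Lc_def norm_divide divide_right_mono)

definition gfun :: "complex \<Rightarrow> complex^'n::finite \<Rightarrow> complex^'n \<Rightarrow> ('n \<Rightarrow> real) \<Rightarrow> complex \<Rightarrow> complex" where
  "gfun a b c x z = (LINT s:{0<..}|lborel. of_real s powr (a - 1) / of_real (exp s) *
       (\<Prod>k\<in>UNIV. En (b$k) (c$k) (z * of_real (x k * s)))) / Gamma a"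

lemma gfun_holo:
  fixes b c :: "complex^'n::finite"
  assumes a: "Re a > 0" and b: "\<forall>k. Re (b$k) > 0" and c: "\<forall>k. Re (c$k) > Re (b$k)"
    and x: "\<forall>k. x k \<le> 0"
  defines "eta \<equiv> 1 / (2 * (1 + (\<Sum>k\<in>UNIV. \<bar>x k\<bar>)))"
  shows "gfun a b c x holomorphic_on {z. Re z > - eta}"
proof -
  define L where "L = (\<Prod>k\<in>UNIV. Lc (b$k) (c$k))"
  have Lk: "Lc (b$k) (c$k) \<ge> 0" for k using b c by (intro Lc_nonneg) auto
  hence L: "L \<ge> 0" unfolding L_def by (intro prod_nonneg) auto
  have sx: "(\<Sum>k\<in>UNIV. \<bar>x k\<bar>) \<ge> 0" by (intro sum_nonneg) auto
  define X where "X = (\<Sum>k\<in>UNIV. \<bar>x k\<bar>)"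
  have X0: "X \<ge> 0" unfolding X_def by (intro sum_nonneg) auto
  have d: "2 * (1 + X) > 0" by (intro mult_pos_pos) (use X0 in auto)
  have eta1: "eta > 0" unfolding eta_def X_def[symmetric] using d by simp
  have "eta * X = X / (2 * (1 + X))" by (simp add: eta_def X_def)
  also have "\<dots> \<le> 1/2" using d by (subst divide_le_eq) auto
  finally have eta: "eta > 0" "eta * (\<Sum>k\<in>UNIV. \<bar>x k\<bar>) \<le> 1/2" using eta1 by (auto simp: X_def)
  have "(\<lambda>z. LINT s:{0<..}|lborel. of_real s powr (a - 1) / of_real (exp s) *
       (\<Prod>k\<in>UNIV. En (b$k) (c$k) (z * of_real (x k * s)))) holomorphic_on {z. Re z > - eta}"
  proof (rule holomorphic_on_set_integral[where h = "\<lambda>s. L * (s powr (Re a - 1) * exp (- (1/2) * s))"])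
    show "open {z. Re z > - eta}" by (rule open_halfspace_Re_gt)
    show "(\<lambda>z. of_real s powr (a - 1) / of_real (exp s) *
       (\<Prod>k\<in>UNIV. En (b$k) (c$k) (z * of_real (x k * s)))) holomorphic_on {z. Re z > - eta}" for s
      using b c by (intro holomorphic_intros En_holo) auto
    show "set_borel_measurable lborel {0<..} (\<lambda>s. of_real s powr (a - 1) / of_real (exp s) *
       (\<Prod>k\<in>UNIV. En (b$k) (c$k) (z * of_real (x k * s))))" for z
    proof -
      have pm: "(\<lambda>s. \<Prod>k\<in>UNIV. En (b$k) (c$k) (z * of_real (x k * s))) \<in> borel_measurable borel"
        by (intro borel_measurable_prod En_meas) (use b c in auto)
      note [measurable] = pm
      show ?thesis unfolding set_borel_measurable_def by measurable
    qed
    show "set_integrable lborel {0<..} (\<lambda>s. L * (s powr (Re a - 1) * exp (- (1/2) * s)))"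
      using a by (intro gamma_dom_integrable) auto
    fix z :: complex and s :: real assume z: "z \<in> {z. Re z > - eta}" and s: "s \<in> {0<..}"
    have bk: "norm (En (b$k) (c$k) (z * of_real (x k * s))) \<le> exp (eta * \<bar>x k\<bar> * s) * Lc (b$k) (c$k)" for k
    proof -
      have "Re (z * of_real (x k * s)) = Re z * (x k * s)" by simp
      also have "\<dots> \<le> (- eta) * (x k * s)"
        using z s x by (intro mult_right_mono_neg) (auto simp: mult_nonpos_nonneg)
      also have "\<dots> = eta * \<bar>x k\<bar> * s" using x s by simp
      finally have "max 0 (Re (z * of_real (x k * s))) \<le> eta * \<bar>x k\<bar> * s"
        using eta s by auto
      hence "exp (max 0 (Re (z * of_real (x k * s)))) * Lc (b$k) (c$k) \<le> exp (eta * \<bar>x k\<bar> * s) * Lc (b$k) (c$k)"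
        using Lk by (intro mult_right_mono) auto
      thus ?thesis using En_bound[of "b$k" "c$k"] b c by (meson order_trans)
    qed
    have "norm (\<Prod>k\<in>UNIV. En (b$k) (c$k) (z * of_real (x k * s))) \<le> (\<Prod>k\<in>UNIV. exp (eta * \<bar>x k\<bar> * s) * Lc (b$k) (c$k))"
      unfolding prod_norm[symmetric] by (intro prod_mono) (use bk in auto)
    also have "\<dots> = exp (eta * (\<Sum>k\<in>UNIV. \<bar>x k\<bar>) * s) * L"
      by (simp add: L_def prod.distrib exp_sum sum_distrib_left sum_distrib_right)
    also have "\<dots> \<le> exp ((1/2) * s) * L"
      using eta s L by (intro mult_right_mono) auto
    finally have pb: "norm (\<Prod>k\<in>UNIV. En (b$k) (c$k) (z * of_real (x k * s))) \<le> exp ((1/2) * s) * L" .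
    have "norm (of_real s powr (a - 1) / of_real (exp s) *
       (\<Prod>k\<in>UNIV. En (b$k) (c$k) (z * of_real (x k * s)))) =
       s powr (Re a - 1) / exp s * norm (\<Prod>k\<in>UNIV. En (b$k) (c$k) (z * of_real (x k * s)))"
      using s by (simp add: norm_mult norm_divide norm_powr_real_powr)
    also have "\<dots> \<le> s powr (Re a - 1) / exp s * (exp ((1/2) * s) * L)"
      by (intro mult_left_mono pb) auto
    also have "\<dots> = L * (s powr (Re a - 1) * exp (- (1/2) * s))"
      by (simp add: field_simps exp_minus exp_add[symmetric] flip: exp_diff)
    finally show "norm (of_real s powr (a - 1) / of_real (exp s) *
       (\<Prod>k\<in>UNIV. En (b$k) (c$k) (z * of_real (x k * s)))) \<le> L * (s powr (Re a - 1) * exp (- (1/2) * s))" .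
  qed
  thus ?thesis unfolding gfun_def[abs_def] by (intro holomorphic_intros) auto
qed

lemma has_sum_prod_UNIV:
  fixes f :: "'n::finite \<Rightarrow> nat \<Rightarrow> 'c::{real_normed_field,banach,second_countable_topology}"
  assumes S: "\<And>k. (f k has_sum S k) UNIV" and ab: "\<And>k. (\<lambda>j. norm (f k j)) summable_on UNIV"
  shows "((\<lambda>m. \<Prod>k\<in>UNIV. f k (m k)) has_sum (\<Prod>k\<in>UNIV. S k)) UNIV"
proof -
  have old: "Infinite_Set_Sum.abs_summable_on (f k) UNIV" for k
    using abs_summable_equivalent[of "f k" UNIV] ab[of k] by simp
  have "Infinite_Set_Sum.abs_summable_on (\<lambda>m. \<Prod>k\<in>UNIV. f k (m k)) (PiE UNIV (\<lambda>_. UNIV))"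
    by (rule abs_summable_on_prod_PiE) (use old in auto)
  hence "(\<lambda>m. norm (\<Prod>k\<in>UNIV. f k (m k))) summable_on UNIV"
    using abs_summable_equivalent[of "\<lambda>m. \<Prod>k\<in>UNIV. f k (m k)" UNIV] by simp
  hence summ: "(\<lambda>m. \<Prod>k\<in>UNIV. f k (m k)) summable_on UNIV"
    by (rule abs_summable_summable)
  have "infsum (\<lambda>m. \<Prod>k\<in>UNIV. f k (m k)) (PiE UNIV (\<lambda>_. UNIV)) = (\<Prod>k\<in>UNIV. infsum (f k) UNIV)"
    by (rule infsum_prod_PiE_abs) (use ab in auto)
  also have "\<dots> = (\<Prod>k\<in>UNIV. S k)" using S by (intro prod.cong refl infsumI)
  finally show ?thesis using summ by (simp add: summable_iff_has_sum_infsum)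
qed

lemma Beta_shift_norm:
  assumes b: "Re b > 0" and q: "Re q > 0"
  shows "norm (Beta (b + of_nat j) q) \<le> Beta (Re b) (Re q)"
proof -
  have bj: "Re (b + of_nat j) > 0" using b by simp
  have "norm (Beta (b + of_nat j) q) = norm (LINT t:{0<..<1}|lborel. bkern (b + of_nat j) q t)"
    using beta_integral_complex[OF bj q] by simp
  also have "\<dots> \<le> (LINT t:{0<..<1}|lborel. norm (bkern (b + of_nat j) q t))"
    by (rule set_integral_norm_bound[OF bkern_integrable[OF bj q]])
  also have "\<dots> \<le> (LINT t:{0<..<1}|lborel. t powr (Re b - 1) * (1 - t) powr (Re q - 1))"
    by (rule set_integral_mono[OF set_integrable_norm[OF bkern_integrable[OF bj q]] bkern_real_integrable[OF b q]])
       (intro bkern_mono, auto)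
  also have "\<dots> = Beta (Re b) (Re q)" using b q by (rule real_beta_set_integral)
  finally show ?thesis .
qed

lemma En_has_sum:
  assumes b: "Re b > 0" and c: "Re c > Re b"
  shows "((\<lambda>j. pochhammer b j / pochhammer c j * w ^ j / fact j) has_sum En b c w) UNIV"
proof -
  have q: "Re (c - b) > 0" using c by simp
  have "((\<lambda>j. w ^ j / fact j * Beta (b + of_nat j) (c - b) * (1 / Beta b (c - b))) has_sum
         Phi b (c - b) w * (1 / Beta b (c - b))) UNIV"
    by (intro has_sum_cmult_left Phi_has_sum b q)
  moreover have "w ^ j / fact j * Beta (b + of_nat j) (c - b) * (1 / Beta b (c - b)) =
                 pochhammer b j / pochhammer c j * w ^ j / fact j" for j
    using Beta_shift[OF b q, of j] Beta_nz[OF b q] by (simp add: mult_ac)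
  ultimately show ?thesis by (simp add: En_def)
qed

lemma En_coef_bound:
  assumes b: "Re b > 0" and c: "Re c > Re b"
  shows "norm (pochhammer b j / pochhammer c j) \<le> Lc b c"
proof -
  have q: "Re (c - b) > 0" using c by simp
  have "pochhammer b j / pochhammer c j = Beta (b + of_nat j) (c - b) / Beta b (c - b)"
    using Beta_shift[OF b q, of j] Beta_nz[OF b q] by simp
  hence "norm (pochhammer b j / pochhammer c j) = norm (Beta (b + of_nat j) (c - b)) / norm (Beta b (c - b))"
    by (simp add: norm_divide)
  also have "\<dots> \<le> Beta (Re b) (Re (c - b)) / norm (Beta b (c - b))"
    by (intro divide_right_mono Beta_shift_norm b q) auto
  finally show ?thesis by (simp add: Lc_def)
qed

lemma exp_series_has_sum_real:
  fixes u :: real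
  shows "((\<lambda>j. u ^ j / fact j) has_sum exp u) UNIV"
proof (rule norm_summable_imp_has_sum)
  show "summable (\<lambda>j. norm (u ^ j / fact j))"
    using summable_exp[of "norm u"] by (simp add: norm_divide norm_power divide_inverse mult_ac abs_mult power_abs)
  show "(\<lambda>j. u ^ j / fact j) sums exp u"
    using exp_converges[of u] by (simp add: divide_inverse mult_ac)
qed

lemma exp_series_summable_norm:
  fixes u :: real
  shows "(\<lambda>j. C * (u ^ j / fact j)) summable_on UNIV"
  using has_sum_cmult_right[OF exp_series_has_sum_real[of u], of C] by (auto simp: summable_on_def)

lemma set_integral_finite_sum:
  fixes f :: "'i \<Rightarrow> real \<Rightarrow> 'b::{banach,second_countable_topology}"
  assumes "\<And>i. i \<in> F \<Longrightarrow> set_integrable lborel A (f i)"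
  shows "set_integrable lborel A (\<lambda>x. \<Sum>i\<in>F. f i x)"
    and "(LINT x:A|lborel. (\<Sum>i\<in>F. f i x)) = (\<Sum>i\<in>F. LINT x:A|lborel. f i x)"
proof -
  have eq: "(\<lambda>x. indicator A x *\<^sub>R (\<Sum>i\<in>F. f i x)) = (\<lambda>x. \<Sum>i\<in>F. indicator A x *\<^sub>R f i x)"
    by (simp add: scaleR_sum_right)
  show "set_integrable lborel A (\<lambda>x. \<Sum>i\<in>F. f i x)"
    unfolding set_integrable_def eq
    by (rule Bochner_Integration.integrable_sum) (use assms in \<open>auto simp: set_integrable_def\<close>)
  show "(LINT x:A|lborel. (\<Sum>i\<in>F. f i x)) = (\<Sum>i\<in>F. LINT x:A|lborel. f i x)"
    unfolding set_lebesgue_integral_def eq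
    by (rule Bochner_Integration.integral_sum) (use assms in \<open>auto simp: set_integrable_def\<close>)
qed

lemma H_summable:
  fixes Lk r :: "'n::finite \<Rightarrow> real" and al :: real
  assumes al: "al > 0" and Lk: "\<And>k. Lk k \<ge> 0" and r: "\<And>k. r k \<ge> 0" and R: "(\<Sum>k\<in>UNIV. r k) < 1"
  shows "(\<lambda>m::'n\<Rightarrow>nat. Gamma (al + real (\<Sum>k\<in>UNIV. m k)) * (\<Prod>k\<in>UNIV. Lk k * r k ^ m k / fact (m k))) summable_on UNIV"
proof -
  define Rs where "Rs = (\<Sum>k\<in>UNIV. r k)"
  define L where "L = (\<Prod>k\<in>UNIV. Lk k)"
  define N where "N m = (\<Sum>k\<in>UNIV. m k)" for m :: "'n \<Rightarrow> nat"
  define co where "co m = (\<Prod>k\<in>UNIV. Lk k * r k ^ m k / fact (m k))" for m :: "'n \<Rightarrow> nat"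
  define g where "g s k j = Lk k * ((r k * s) ^ j / fact j)" for s :: real and k and j :: nat
  define h where "h m s = s powr (al - 1) * exp (- s) * (\<Prod>k\<in>UNIV. g s k (m k))" for m s
  have L: "L \<ge> 0" unfolding L_def using Lk by (intro prod_nonneg) auto
  have co: "co m \<ge> 0" for m unfolding co_def using Lk r by (intro prod_nonneg) auto
  have h1: "h m s = co m * (s powr (al + real (N m) - 1) * exp (- 1 * s))" if s: "s > 0" for m s
  proof -
    have "(\<Prod>k\<in>UNIV. g s k (m k)) = (\<Prod>k\<in>UNIV. s ^ m k * (Lk k * r k ^ m k / fact (m k)))"
      by (intro prod.cong) (simp_all add: g_def power_mult_distrib field_simps)
    also have "\<dots> = co m * s ^ N m"
      unfolding prod.distrib co_def N_def power_sum by (simp add: mult.commute)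
    finally have "(\<Prod>k\<in>UNIV. g s k (m k)) = co m * s ^ N m" .
    moreover have "s powr (al - 1) * s ^ N m = s powr (al + real (N m) - 1)"
      using s by (simp add: powr_add[symmetric] powr_realpow[symmetric] algebra_simps)
    ultimately show ?thesis by (simp add: h_def mult_ac)
  qed
  have hi: "set_integrable lborel {0<..} (h m)" for m
  proof -
    have "set_integrable lborel {0<..} (\<lambda>s. co m * (s powr (Re (of_real (al + real (N m)) :: complex) - 1) * exp (- 1 * s)))"
      using al by (intro gamma_dom_integrable) auto
    also have "?this \<longleftrightarrow> set_integrable lborel {0<..} (h m)"
      by (intro set_integrable_cong) (auto simp: h1)
    finally show ?thesis .
  qed
  have hI: "(LINT s:{0<..}|lborel. h m s) = co m * Gamma (al + real (N m))" for m
  proof -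
    have "(LINT s:{0<..}|lborel. h m s) = (LINT s:{0<..}|lborel. co m * (s powr (al + real (N m) - 1) * exp (- 1 * s)))"
      by (intro set_lebesgue_integral_cong) (auto simp: h1)
    also have "\<dots> = co m * Gamma (al + real (N m))"
      using gamma_real_scaled[of "al + real (N m)" 1] al by simp
    finally show ?thesis .
  qed
  have gsum: "((\<lambda>j. g s k j) has_sum (Lk k * exp (r k * s))) UNIV" for s k
    unfolding g_def by (intro has_sum_cmult_right exp_series_has_sum_real)
  have gnorm: "(\<lambda>j. norm (g s k j)) summable_on UNIV" if "s \<ge> 0" for s k
  proof -
    have "(\<lambda>j. norm (g s k j)) = (\<lambda>j. Lk k * ((r k * s) ^ j / fact j))"
      using Lk r that by (auto simp: g_def abs_mult intro!: ext)
    thus ?thesis using exp_series_summable_norm by simp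
  qed
  define M where "M = (LINT s:{0<..}|lborel. L * (s powr (al - 1) * exp (- (1 - Rs) * s)))"
  have Mi: "set_integrable lborel {0<..} (\<lambda>s. L * (s powr (Re (of_real al :: complex) - 1) * exp (- (1 - Rs) * s)))"
    using al R by (intro gamma_dom_integrable) (auto simp: Rs_def)
  hence Mi': "set_integrable lborel {0<..} (\<lambda>s. L * (s powr (al - 1) * exp (- (1 - Rs) * s)))"
    by simp
  have hF: "(\<Sum>m\<in>F. h m s) \<le> L * (s powr (al - 1) * exp (- (1 - Rs) * s))" if F: "finite F" and s: "s > 0" for F s
  proof -
    have hs: "((\<lambda>m. \<Prod>k\<in>UNIV. g s k (m k)) has_sum (\<Prod>k\<in>UNIV. Lk k * exp (r k * s))) UNIV"
      by (rule has_sum_prod_UNIV[OF gsum gnorm]) (use s in auto)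
    have gnn: "(\<Prod>k\<in>UNIV. g s k (m k)) \<ge> 0" for m
      using Lk r s by (intro prod_nonneg) (auto simp: g_def)
    have "(\<Sum>m\<in>F. \<Prod>k\<in>UNIV. g s k (m k)) \<le> (\<Prod>k\<in>UNIV. Lk k * exp (r k * s))"
      by (rule finite_sum_le_has_sum[OF hs F]) (use gnn in auto)
    also have "\<dots> = L * exp (Rs * s)"
      by (simp add: L_def Rs_def prod.distrib exp_sum sum_distrib_right)
    finally have "(\<Sum>m\<in>F. \<Prod>k\<in>UNIV. g s k (m k)) \<le> L * exp (Rs * s)" .
    hence "s powr (al - 1) * exp (- s) * (\<Sum>m\<in>F. \<Prod>k\<in>UNIV. g s k (m k)) \<le> s powr (al - 1) * exp (- s) * (L * exp (Rs * s))"
      by (intro mult_left_mono) auto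
    also have "\<dots> = L * (s powr (al - 1) * exp (- (1 - Rs) * s))"
      by (simp add: algebra_simps exp_add[symmetric])
    finally show ?thesis by (simp add: h_def sum_distrib_left)
  qed
  show ?thesis
  proof (rule nonneg_bdd_above_summable_on)
    show "0 \<le> Gamma (al + real (\<Sum>k\<in>UNIV. m k)) * (\<Prod>k\<in>UNIV. Lk k * r k ^ m k / fact (m k))" for m
    proof -
      have "real (\<Sum>k\<in>UNIV. m k) \<ge> 0" by (rule of_nat_0_le_iff)
      hence "al + real (\<Sum>k\<in>UNIV. m k) > 0" using al by linarith
      hence "Gamma (al + real (\<Sum>k\<in>UNIV. m k)) > 0" by (rule Gamma_real_pos)
      thus ?thesis using co[of m] by (auto simp: co_def)
    qed
    show "bdd_above (sum (\<lambda>m. Gamma (al + real (\<Sum>k\<in>UNIV. m k)) * (\<Prod>k\<in>UNIV. Lk k * r k ^ m k / fact (m k))) ` {F. F \<subseteq> UNIV \<and> finite F})"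
    proof (rule bdd_aboveI2)
      fix F :: "('n \<Rightarrow> nat) set" assume "F \<in> {F. F \<subseteq> UNIV \<and> finite F}"
      hence F: "finite F" by auto
      have "(\<Sum>m\<in>F. Gamma (al + real (\<Sum>k\<in>UNIV. m k)) * (\<Prod>k\<in>UNIV. Lk k * r k ^ m k / fact (m k))) =
            (\<Sum>m\<in>F. LINT s:{0<..}|lborel. h m s)"
        by (simp add: hI co_def N_def mult_ac)
      also have "\<dots> = (LINT s:{0<..}|lborel. (\<Sum>m\<in>F. h m s))"
        by (rule set_integral_finite_sum(2)[symmetric]) (rule hi)
      also have "\<dots> \<le> M"
        unfolding M_def
        by (rule set_integral_mono[OF set_integral_finite_sum(1)[OF hi] Mi']) (use hF F in auto)
      finally show "(\<Sum>m\<in>F. Gamma (al + real (\<Sum>k\<in>UNIV. m k)) * (\<Prod>k\<in>UNIV. Lk k * r k ^ m k / fact (m k))) \<le> M" .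
    qed
  qed
qed

lemma infinite_UNIV_fun_nat: "infinite (UNIV :: ('n \<Rightarrow> nat) set)"
proof
  assume "finite (UNIV :: ('n \<Rightarrow> nat) set)"
  hence "finite (range (\<lambda>n::nat. (\<lambda>_::'n. n)))" by (rule finite_subset[rotated]) auto
  moreover have "inj (\<lambda>n::nat. (\<lambda>_::'n. n))" by (auto simp: inj_def fun_eq_iff)
  ultimately have "finite (UNIV :: nat set)" by (rule finite_imageD)
  thus False by simp
qed

lemma gfun_series:
  fixes b c :: "complex^'n::finite"
  assumes a: "Re a > 0" and b: "\<forall>k. Re (b$k) > 0" and c: "\<forall>k. Re (c$k) > Re (b$k)"
    and z: "norm z * (\<Sum>k\<in>UNIV. \<bar>x k\<bar>) < 1"
  shows "gfun a b c x z = FA_series a b c (\<chi> k. z * of_real (x k))"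
proof -
  define P where "P k j = pochhammer (b$k) j / pochhammer (c$k) j * (z * of_real (x k)) ^ j / fact j" for k j
  define Q where "Q m = (\<Prod>k\<in>UNIV. P k (m k))" for m :: "'n \<Rightarrow> nat"
  define N where "N m = (\<Sum>k\<in>UNIV. m k)" for m :: "'n \<Rightarrow> nat"
  define r where "r k = norm z * \<bar>x k\<bar>" for k
  define F where "F s = of_real s powr (a - 1) / of_real (exp s) *
       (\<Prod>k\<in>UNIV. En (b$k) (c$k) (z * of_real (x k * s))) / Gamma a" for s :: real
  define f where "f m s = Q m / Gamma a * (of_real s powr (a + of_nat (N m) - 1) / of_real (exp s))" for m s
  have Lk: "Lc (b$k) (c$k) \<ge> 0" for k using b c by (intro Lc_nonneg) auto
  have Pb: "norm (P k j) \<le> Lc (b$k) (c$k) * (r k ^ j / fact j)" for k j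
  proof -
    have "norm (P k j) = norm (pochhammer (b$k) j / pochhammer (c$k) j) * (r k ^ j / fact j)"
      by (simp add: P_def r_def norm_mult norm_divide norm_power)
    also have "\<dots> \<le> Lc (b$k) (c$k) * (r k ^ j / fact j)"
      using b c by (intro mult_right_mono En_coef_bound) (auto simp: r_def)
    finally show ?thesis .
  qed
  have hk: "((\<lambda>j. P k j * of_real s ^ j) has_sum En (b$k) (c$k) (z * of_real (x k * s))) UNIV" for k s
  proof -
    have "((\<lambda>j. pochhammer (b$k) j / pochhammer (c$k) j * (z * of_real (x k * s)) ^ j / fact j) has_sum
            En (b$k) (c$k) (z * of_real (x k * s))) UNIV"
      using b c by (intro En_has_sum) auto
    moreover have "pochhammer (b$k) j / pochhammer (c$k) j * (z * of_real (x k * s)) ^ j / fact j = P k j * of_real s ^ j" for j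
      by (simp add: P_def power_mult_distrib)
    ultimately show ?thesis by simp
  qed
  have hab: "(\<lambda>j. norm (P k j * of_real s ^ j)) summable_on UNIV" if s: "s > 0" for k s
  proof -
    have "summable (\<lambda>j. Lc (b$k) (c$k) * ((r k * s) ^ j / fact j))"
      using has_sum_imp_sums[OF has_sum_cmult_right[OF exp_series_has_sum_real[of "r k * s"], of "Lc (b$k) (c$k)"]]
      by (rule sums_summable)
    hence "summable (\<lambda>j. norm (P k j * of_real s ^ j))"
    proof (rule summable_comparison_test[rotated])
      show "\<exists>N. \<forall>n\<ge>N. norm (norm (P k n * of_real s ^ n)) \<le> Lc (b$k) (c$k) * ((r k * s) ^ n / fact n)"
      proof (intro exI[of _ 0] allI impI)
        fix n :: nat
        have "norm (P k n * of_real s ^ n) = norm (P k n) * s ^ n" using s by (simp add: norm_mult norm_power)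
        also have "\<dots> \<le> Lc (b$k) (c$k) * (r k ^ n / fact n) * s ^ n"
          using s by (intro mult_right_mono Pb) auto
        also have "\<dots> = Lc (b$k) (c$k) * ((r k * s) ^ n / fact n)" by (simp add: power_mult_distrib)
        finally show "norm (norm (P k n * of_real s ^ n)) \<le> Lc (b$k) (c$k) * ((r k * s) ^ n / fact n)" by simp
      qed
    qed
    thus ?thesis by (subst summable_on_UNIV_nonneg_real_iff) auto
  qed
  have prod: "((\<lambda>m. Q m * of_real s ^ N m) has_sum (\<Prod>k\<in>UNIV. En (b$k) (c$k) (z * of_real (x k * s)))) UNIV"
    if s: "s > 0" for s
  proof -
    have "((\<lambda>m. \<Prod>k\<in>UNIV. P k (m k) * of_real s ^ (m k)) has_sum (\<Prod>k\<in>UNIV. En (b$k) (c$k) (z * of_real (x k * s)))) UNIV"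
      by (rule has_sum_prod_UNIV[OF hk hab[OF s]])
    moreover have "(\<Prod>k\<in>UNIV. P k (m k) * of_real s ^ (m k)) = Q m * of_real s ^ N m" for m
      unfolding prod.distrib Q_def N_def power_sum ..
    ultimately show ?thesis by simp
  qed
  have ptw: "((\<lambda>m. f m s) has_sum F s) UNIV" if s: "s \<in> {0<..}" for s
  proof -
    have sp: "(of_real s :: complex) \<noteq> 0" using s by simp
    have "((\<lambda>m. of_real s powr (a - 1) / of_real (exp s) / Gamma a * (Q m * of_real s ^ N m)) has_sum
          of_real s powr (a - 1) / of_real (exp s) / Gamma a * (\<Prod>k\<in>UNIV. En (b$k) (c$k) (z * of_real (x k * s)))) UNIV"
      using s by (intro has_sum_cmult_right prod) auto
    moreover have "of_real s powr (a - 1) / of_real (exp s) / Gamma a * (Q m * of_real s ^ N m) = f m s" for m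
    proof -
      have "(of_real s powr (a + of_nat (N m) - 1) :: complex) = of_real s powr (a - 1) * of_real s powr (of_nat (N m))"
        by (subst powr_add[symmetric]) (simp add: algebra_simps)
      also have "(of_real s powr (of_nat (N m)) :: complex) = of_real s ^ N m" using sp by (simp add: powr_nat)
      finally show ?thesis by (simp add: f_def mult_ac)
    qed
    ultimately show ?thesis by (simp add: F_def)
  qed
  have aN: "Re (a + of_nat (N m)) > 0" for m using a by simp
  have fint: "set_integrable lborel {0<..} (f m)" for m
    unfolding f_def by (intro set_integrable_mult_right Gamma_set_integrable_lborel aN)
  have fI: "(LINT s:{0<..}|lborel. f m s) = Q m * pochhammer a (N m)" for m
  proof -
    have "(LINT s:{0<..}|lborel. f m s) = Q m / Gamma a * Gamma (a + of_nat (N m))"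
      unfolding f_def set_integral_mult_right Gamma_set_integral_lborel[OF aN] ..
    also have "pochhammer a (N m) = Gamma (a + of_nat (N m)) / Gamma a"
      using a by (intro pochhammer_Gamma Re_pos_not_nonpos_Ints)
    ultimately show ?thesis by simp
  qed
  have fnorm: "(LINT s:{0<..}|lborel. norm (f m s)) = norm (Q m) / norm (Gamma a) * Gamma (Re a + real (N m))" for m
  proof -
    have "(LINT s:{0<..}|lborel. norm (f m s)) =
          (LINT s:{0<..}|lborel. norm (Q m) / norm (Gamma a) * (s powr (Re a + real (N m) - 1) * exp (- 1 * s)))"
      by (intro set_lebesgue_integral_cong)
         (auto simp: f_def norm_mult norm_divide norm_powr_real_powr exp_minus field_simps)
    also have "\<dots> = norm (Q m) / norm (Gamma a) * Gamma (Re a + real (N m))"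
      using gamma_real_scaled[of "Re a + real (N m)" 1] a by simp
    finally show ?thesis .
  qed
  have summ: "(\<lambda>m. LINT s:{0<..}|lborel. norm (f m s)) summable_on UNIV"
  proof -
    have rs: "(\<Sum>k\<in>UNIV. r k) < 1" using z by (simp add: r_def sum_distrib_left)
    have H: "(\<lambda>m::'n\<Rightarrow>nat. Gamma (Re a + real (\<Sum>k\<in>UNIV. m k)) * (\<Prod>k\<in>UNIV. Lc (b$k) (c$k) * r k ^ m k / fact (m k))) summable_on UNIV"
      by (rule H_summable[OF a Lk _ rs]) (auto simp: r_def)
    hence H': "(\<lambda>m::'n\<Rightarrow>nat. Gamma (Re a + real (\<Sum>k\<in>UNIV. m k)) * (\<Prod>k\<in>UNIV. Lc (b$k) (c$k) * r k ^ m k / fact (m k))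
                / norm (Gamma a)) summable_on UNIV"
      using summable_on_cmult_left[OF H, of "1 / norm (Gamma a)"] by simp
    show ?thesis
    proof (rule summable_on_comparison_test[OF H'])
      fix m :: "'n \<Rightarrow> nat"
      show "0 \<le> (LINT s:{0<..}|lborel. norm (f m s))"
        unfolding set_lebesgue_integral_def by (intro Bochner_Integration.integral_nonneg) auto
      have g: "Gamma (Re a + real (N m)) > 0"
      proof -
        have "real (N m) \<ge> 0" by (rule of_nat_0_le_iff)
        thus ?thesis using a by (intro Gamma_real_pos) linarith
      qed
      have "norm (Q m) \<le> (\<Prod>k\<in>UNIV. Lc (b$k) (c$k) * r k ^ m k / fact (m k))"
        unfolding Q_def prod_norm[symmetric] by (intro prod_mono) (use Pb in auto)
      hence "norm (Q m) / norm (Gamma a) * Gamma (Re a + real (N m)) \<le>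
             (\<Prod>k\<in>UNIV. Lc (b$k) (c$k) * r k ^ m k / fact (m k)) / norm (Gamma a) * Gamma (Re a + real (N m))"
        using g by (intro mult_right_mono divide_right_mono) auto
      thus "(LINT s:{0<..}|lborel. norm (f m s)) \<le>
            Gamma (Re a + real (\<Sum>k\<in>UNIV. m k)) * (\<Prod>k\<in>UNIV. Lc (b$k) (c$k) * r k ^ m k / fact (m k)) / norm (Gamma a)"
        unfolding fnorm by (simp add: N_def mult_ac)
    qed
  qed
  obtain e :: "nat \<Rightarrow> ('n \<Rightarrow> nat)" where e: "bij_betw e UNIV UNIV"
    by (rule countable_infiniteE'[OF countableI_type infinite_UNIV_fun_nat])
  have hs: "((\<lambda>m. LINT s:{0<..}|lborel. f m s) has_sum (LINT s:{0<..}|lborel. F s)) UNIV"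
    by (rule set_integral_has_sum_bij(2)[OF e fint summ ptw])
  have "gfun a b c x z = (LINT s:{0<..}|lborel. F s)"
    unfolding gfun_def F_def by (simp only: set_integral_divide_zero)
  also have "\<dots> = infsum (\<lambda>m. Q m * pochhammer a (N m)) UNIV"
    using hs unfolding fI by (simp add: infsumI)
  also have "\<dots> = FA_series a b c (\<chi> k. z * of_real (x k))"
    unfolding FA_series_def FA_term_def
    by (intro infsum_cong) (simp add: Q_def N_def P_def mult_ac)
  finally show ?thesis .
qed

lemma Phi_continuous: "Re b > 0 \<Longrightarrow> Re q > 0 \<Longrightarrow> continuous_on UNIV (Phi b q)"
  by (rule holomorphic_on_imp_continuous_on[OF Phi_holomorphic])

lemma psi_meas [measurable]:
  assumes "Re b > 0" "Re q > 0"
  shows "(\<lambda>s. psi b q y s) \<in> borel_measurable borel"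
proof -
  have "continuous_on UNIV (\<lambda>s. Phi b q (of_real ((1 - 1/y) * s)))"
    by (rule continuous_on_compose2[OF Phi_continuous[OF assms]]) (auto intro!: continuous_intros)
  hence "(\<lambda>s. Phi b q (of_real ((1 - 1/y) * s))) \<in> borel_measurable borel"
    by (rule borel_measurable_continuous_onI)
  thus ?thesis unfolding psi_def by measurable
qed

lemma Lauricella_gfun:
  fixes b c :: "complex^'n::finite" and y :: "real^'n"
  assumes a: "Re a > 0" and b: "\<forall>k. Re (b$k) > 0" and c: "\<forall>k. Re (c$k) > Re (b$k)"
    and y: "\<forall>k. 0 < y$k \<and> y$k \<le> 1"
  shows "LauricellaFA a b c (\<chi> k. 1 - 1 / complex_of_real (y$k)) = gfun a b c (\<lambda>k. 1 - 1 / y$k) 1"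
proof -
  define x where "x k = 1 - 1 / y$k" for k
  have x: "\<forall>k. x k \<le> 0" using y by (auto simp: x_def field_simps)
  define eta where "eta = 1 / (2 * (1 + (\<Sum>k\<in>UNIV. \<bar>x k\<bar>)))"
  define X where "X = (\<Sum>k\<in>UNIV. \<bar>x k\<bar>)"
  have X0: "X \<ge> 0" unfolding X_def by (intro sum_nonneg) auto
  have d: "2 * (1 + X) > 0" by (intro mult_pos_pos) (use X0 in auto)
  have eta1: "eta > 0" unfolding eta_def X_def[symmetric] using d by simp
  have "eta * X = X / (2 * (1 + X))" by (simp add: eta_def X_def)
  also have "\<dots> \<le> 1/2" using d by (subst divide_le_eq) auto
  finally have etaX: "eta * X \<le> 1/2" .
  have hol: "gfun a b c x holomorphic_on {z. Re z > - eta}"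
    unfolding eta_def by (rule gfun_holo[OF a b c x])
  have cv: "convex {z::complex. Re z > - eta}" by (rule convex_halfspace_Re_gt)
  show ?thesis
    unfolding x_def[symmetric]
  proof (rule LauricellaFA_eqI[OF open_halfspace_Re_gt convex_connected[OF cv] _ hol eta1])
    show "closed_segment 0 1 \<subseteq> {z. - eta < Re z}"
      by (rule closed_segment_subset[OF _ _ cv]) (use eta1 in auto)
    show "ball 0 eta \<subseteq> {z. - eta < Re z}"
    proof
      fix z :: complex assume "z \<in> ball 0 eta"
      hence "norm z < eta" by simp
      moreover have "- Re z \<le> norm z" using abs_Re_le_cmod[of z] by linarith
      ultimately show "z \<in> {z. - eta < Re z}" by auto
    qed
    show "\<forall>z\<in>ball 0 eta. gfun a b c x z = FA_series a b c (\<chi> k. z * (\<chi> k. 1 - 1 / complex_of_real (y$k))$k)"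
    proof
      fix z :: complex assume "z \<in> ball 0 eta"
      hence zn: "norm z < eta" by simp
      have "norm z * X \<le> eta * X" using zn X0 by (intro mult_right_mono) auto
      hence "norm z * (\<Sum>k\<in>UNIV. \<bar>x k\<bar>) < 1" using etaX by (simp add: X_def)
      hence "gfun a b c x z = FA_series a b c (\<chi> k. z * of_real (x k))"
        by (rule gfun_series[OF a b c])
      also have "(\<chi> k. z * of_real (x k)) = (\<chi> k. z * (\<chi> k. 1 - 1 / complex_of_real (y$k))$k)"
        by (simp add: x_def)
      finally show "gfun a b c x z = FA_series a b c (\<chi> k. z * (\<chi> k. 1 - 1 / complex_of_real (y$k))$k)" .
    qed
  qed
qed

lemma Gamma_over_Beta:
  assumes "Re b > 0" "Re c > Re b"
  shows "Gamma b / Beta b (c - b) = Gamma c / Gamma (c - b)"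
proof -
  have "Gamma b \<noteq> 0" "Gamma (c - b) \<noteq> 0" using assms by (auto intro!: Gamma_nz)
  thus ?thesis by (simp add: Beta_def field_simps)
qed

theorem corollary1:
  fixes a :: complex and b c :: "complex^'n::finite"
  assumes "Re a > Re (\<Sum>k\<in>UNIV. b$k)" and "Re (\<Sum>k\<in>UNIV. b$k) > 0"
    and "\<forall>k. Re (c$k) > Re (b$k)" and "\<forall>k. Re (b$k) > 0"
  shows "((\<lambda>y::real^'n. (\<Prod>k\<in>UNIV. (complex_of_real (y$k)) powr (- (b$k))) *
            LauricellaFA a b c (\<chi> k. 1 - 1 / complex_of_real (y$k)))
         \<longlongrightarrow> Gamma (a - (\<Sum>k\<in>UNIV. b$k)) / Gamma a *
               (\<Prod>k\<in>UNIV. Gamma (c$k) / Gamma (c$k - b$k)))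
         (at 0 within {y. \<forall>k. y$k > 0})"
proof -
  note ab = assms(1) and b = assms(4) and c = assms(3)
  have a: "Re a > 0" using assms(1,2) by linarith
  have q: "Re (c$k - b$k) > 0" for k using c by simp
  have bk: "Re (b$k) > 0" for k using b by simp
  have ReS: "Re (\<Sum>k\<in>UNIV. b$k) = (\<Sum>k\<in>UNIV. Re (b$k))" by (simp add: Re_sum)
  define T where "T = {y::real^'n. \<forall>k. 0 < y$k \<and> y$k \<le> 1/2}"
  define Bt where "Bt k = Beta (b$k) (c$k - b$k)" for k
  have Bnz: "Bt k \<noteq> 0" for k unfolding Bt_def by (intro Beta_nz bk q)
  define G where "G y s = of_real s powr (a - 1) / of_real (exp s) *
     (\<Prod>k\<in>UNIV. psi (b$k) (c$k - b$k) (y$k) s / Bt k) / Gamma a" for y :: "real^'n" and s :: real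
  define G0 where "G0 s = of_real s powr (a - 1) / of_real (exp s) *
     (\<Prod>k\<in>UNIV. Gamma (b$k) / of_real s powr (b$k) / Bt k) / Gamma a" for s :: real
  have V: "(\<Prod>k\<in>UNIV. (complex_of_real (y$k)) powr (- (b$k))) *
            LauricellaFA a b c (\<chi> k. 1 - 1 / complex_of_real (y$k)) = (LINT s:{0<..}|lborel. G y s)"
    if y: "y \<in> T" for y
  proof -
    have y1: "\<forall>k. 0 < y$k \<and> y$k \<le> 1"
    proof
      fix k
      have "0 < y$k" "y$k \<le> 1/2" using y unfolding T_def by blast+
      thus "0 < y$k \<and> y$k \<le> 1" by simp
    qed
    have "LauricellaFA a b c (\<chi> k. 1 - 1 / complex_of_real (y$k)) = gfun a b c (\<lambda>k. 1 - 1 / y$k) 1"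
      by (rule Lauricella_gfun[OF a b c y1])
    also have "\<dots> = (LINT s:{0<..}|lborel. of_real s powr (a - 1) / of_real (exp s) *
       (\<Prod>k\<in>UNIV. En (b$k) (c$k) (1 * of_real ((1 - 1 / y$k) * s)))) / Gamma a"
      unfolding gfun_def ..
    finally have L: "LauricellaFA a b c (\<chi> k. 1 - 1 / complex_of_real (y$k)) = \<dots>" .
    have pt: "(\<Prod>k\<in>UNIV. (complex_of_real (y$k)) powr (- (b$k))) * (of_real s powr (a - 1) / of_real (exp s) *
       (\<Prod>k\<in>UNIV. En (b$k) (c$k) (1 * of_real ((1 - 1 / y$k) * s)))) / Gamma a = G y s" for s
    proof -
      have "(\<Prod>k\<in>UNIV. (complex_of_real (y$k)) powr (- (b$k))) * (\<Prod>k\<in>UNIV. En (b$k) (c$k) (1 * of_real ((1 - 1 / y$k) * s)))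
            = (\<Prod>k\<in>UNIV. psi (b$k) (c$k - b$k) (y$k) s / Bt k)"
        unfolding prod.distrib[symmetric]
        by (intro prod.cong refl) (simp add: En_def psi_def Bt_def)
      thus ?thesis unfolding G_def by (simp add: mult_ac)
    qed
    define P where "P = (\<Prod>k\<in>UNIV. (complex_of_real (y$k)) powr (- (b$k)))"
    define h where "h s = of_real s powr (a - 1) / of_real (exp s) *
       (\<Prod>k\<in>UNIV. En (b$k) (c$k) (1 * of_real ((1 - 1 / y$k) * s)))" for s
    have "(LINT s:{0<..}|lborel. P * h s / Gamma a) = P * (LINT s:{0<..}|lborel. h s) / Gamma a"
      by (simp only: set_integral_divide_zero set_integral_mult_right)
    also have "(LINT s:{0<..}|lborel. P * h s / Gamma a) = (LINT s:{0<..}|lborel. G y s)"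
      using pt unfolding P_def h_def by (intro set_lebesgue_integral_cong) auto
    finally show ?thesis unfolding L P_def[symmetric] h_def[symmetric] by simp
  qed
  obtain K where K0: "\<And>k. K k \<ge> 0"
    and K: "\<And>k y s. 0 < y \<Longrightarrow> y \<le> 1/2 \<Longrightarrow> s > 0 \<Longrightarrow> norm (psi (b$k) (c$k - b$k) y s) \<le> K k * s powr (- Re (b$k))"
  proof -
    have "\<forall>k. \<exists>Kk. Kk \<ge> 0 \<and> (\<forall>y s. 0 < y \<longrightarrow> y \<le> 1/2 \<longrightarrow> s > 0 \<longrightarrow>
            norm (psi (b$k) (c$k - b$k) y s) \<le> Kk * s powr (- Re (b$k)))"
    proof
      fix k
      obtain Kk where "Kk \<ge> 0" "\<And>y s. 0 < y \<Longrightarrow> y \<le> 1/2 \<Longrightarrow> s > 0 \<Longrightarrow>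
            norm (psi (b$k) (c$k - b$k) y s) \<le> Kk * s powr (- Re (b$k))"
        using psi_bound[OF bk q] by blast
      thus "\<exists>Kk. Kk \<ge> 0 \<and> (\<forall>y s. 0 < y \<longrightarrow> y \<le> 1/2 \<longrightarrow> s > 0 \<longrightarrow>
            norm (psi (b$k) (c$k - b$k) y s) \<le> Kk * s powr (- Re (b$k)))" by blast
    qed
    then obtain K where "\<forall>k. K k \<ge> 0 \<and> (\<forall>y s. 0 < y \<longrightarrow> y \<le> 1/2 \<longrightarrow> s > 0 \<longrightarrow>
            norm (psi (b$k) (c$k - b$k) y s) \<le> K k * s powr (- Re (b$k)))" by metis
    thus thesis using that by blast
  qed
  define al where "al = a - (\<Sum>k\<in>UNIV. b$k)"
  have al: "Re al > 0" using ab by (simp add: al_def)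
  have Real: "Re al = Re a - (\<Sum>k\<in>UNIV. Re (b$k))" by (simp add: al_def ReS)
  define Cw where "Cw = (\<Prod>k\<in>UNIV. K k / norm (Bt k)) / norm (Gamma a)"
  have lim: "((\<lambda>y. LINT s:{0<..}|lborel. G y s) \<longlongrightarrow> (LINT s:{0<..}|lborel. G0 s)) (at 0 within T)"
  proof (rule set_integral_dominated_at_within[where w = "\<lambda>s. Cw * (s powr (Re al - 1) * exp (- 1 * s))"])
    show "set_borel_measurable lborel {0<..} (G y)" for y
    proof -
      have pm: "(\<lambda>s. \<Prod>k\<in>UNIV. psi (b$k) (c$k - b$k) (y$k) s / Bt k) \<in> borel_measurable borel"
        by (intro borel_measurable_prod borel_measurable_divide psi_meas bk q) auto
      note [measurable] = pm
      show ?thesis unfolding set_borel_measurable_def G_def by measurable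
    qed
    show "set_integrable lborel {0<..} (\<lambda>s. Cw * (s powr (Re al - 1) * exp (- 1 * s)))"
      by (rule gamma_dom_integrable[OF al]) simp
    show "norm (G y s) \<le> Cw * (s powr (Re al - 1) * exp (- 1 * s))" if y: "y \<in> T" and s: "s \<in> {0<..}" for y s
    proof -
      have s0: "s > 0" using s by simp
      have pk: "norm (psi (b$k) (c$k - b$k) (y$k) s / Bt k) \<le> K k / norm (Bt k) * s powr (- Re (b$k))" for k
      proof -
        have "0 < y$k" "y$k \<le> 1/2" using y unfolding T_def by blast+
        hence "norm (psi (b$k) (c$k - b$k) (y$k) s) \<le> K k * s powr (- Re (b$k))" using K s0 by blast
        thus ?thesis by (simp add: norm_divide divide_right_mono field_simps)
      qed
      have "norm (\<Prod>k\<in>UNIV. psi (b$k) (c$k - b$k) (y$k) s / Bt k) \<le> (\<Prod>k\<in>UNIV. K k / norm (Bt k) * s powr (- Re (b$k)))"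
        unfolding prod_norm[symmetric] by (intro prod_mono) (use pk in auto)
      also have "\<dots> = (\<Prod>k\<in>UNIV. K k / norm (Bt k)) * (\<Prod>k\<in>UNIV. s powr (- Re (b$k)))"
        by (simp only: prod.distrib)
      also have "(\<Prod>k\<in>UNIV. s powr (- Re (b$k))) = s powr (- (\<Sum>k\<in>UNIV. Re (b$k)))"
        using s0 by (simp add: powr_sum sum_negf[symmetric])
      finally have pb: "norm (\<Prod>k\<in>UNIV. psi (b$k) (c$k - b$k) (y$k) s / Bt k) \<le>
                        (\<Prod>k\<in>UNIV. K k / norm (Bt k)) * s powr (- (\<Sum>k\<in>UNIV. Re (b$k)))" .
      have "norm (G y s) = s powr (Re a - 1) / exp s * norm (\<Prod>k\<in>UNIV. psi (b$k) (c$k - b$k) (y$k) s / Bt k) / norm (Gamma a)"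
        using s0 by (simp add: G_def norm_mult norm_divide norm_powr_real_powr)
      also have "\<dots> \<le> s powr (Re a - 1) / exp s * ((\<Prod>k\<in>UNIV. K k / norm (Bt k)) * s powr (- (\<Sum>k\<in>UNIV. Re (b$k)))) / norm (Gamma a)"
        by (intro divide_right_mono mult_left_mono pb) auto
      also have "\<dots> = Cw * ((s powr (Re a - 1) * s powr (- (\<Sum>k\<in>UNIV. Re (b$k)))) * exp (- 1 * s))"
        by (simp add: Cw_def exp_minus field_simps)
      also have "s powr (Re a - 1) * s powr (- (\<Sum>k\<in>UNIV. Re (b$k))) = s powr (Re al - 1)"
        by (simp add: Real powr_add[symmetric] algebra_simps)
      finally show ?thesis .
    qed
    show "((\<lambda>y. G y s) \<longlongrightarrow> G0 s) (at 0 within T)" if s: "s \<in> {0<..}" for s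
    proof -
      have comp: "filterlim (\<lambda>y::real^'n. y$k) (at 0 within {0<..1/2}) (at 0 within T)" for k
        unfolding filterlim_at
      proof
        show "\<forall>\<^sub>F y in at 0 within T. y$k \<in> {0<..1/2} \<and> y$k \<noteq> 0"
          unfolding eventually_at_filter
        proof (intro always_eventually allI impI)
          fix y :: "real^'n" assume "y \<in> T"
          hence "0 < y$k" "y$k \<le> 1/2" unfolding T_def by blast+
          thus "y$k \<in> {0<..1/2} \<and> y$k \<noteq> 0" by simp
        qed
        have "((\<lambda>y::real^'n. y) \<longlongrightarrow> 0) (at 0 within T)" by (rule tendsto_ident_at)
        thus "((\<lambda>y::real^'n. y$k) \<longlongrightarrow> 0) (at 0 within T)" using tendsto_vec_nth by fastforce
      qed
      have pl: "((\<lambda>y. psi (b$k) (c$k - b$k) (y$k) s) \<longlongrightarrow> Gamma (b$k) / of_real s powr (b$k)) (at 0 within T)" for k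
        using filterlim_compose[OF psi_lim[OF bk q, of s] comp[of k]] s by simp
      show ?thesis unfolding G_def G0_def
        by (intro tendsto_intros pl) (auto simp: Bnz Gamma_nz[OF a])
    qed
  qed
  have val: "(LINT s:{0<..}|lborel. G0 s) = Gamma (a - (\<Sum>k\<in>UNIV. b$k)) / Gamma a *
               (\<Prod>k\<in>UNIV. Gamma (c$k) / Gamma (c$k - b$k))"
  proof -
    define C0 where "C0 = (\<Prod>k\<in>UNIV. Gamma (b$k) / Bt k) / Gamma a"
    have "G0 s = C0 * (of_real s powr (al - 1) / of_real (exp s))" if s: "s \<in> {0<..}" for s
    proof -
      have sp: "(of_real s :: complex) \<noteq> 0" using s by simp
      have "(\<Prod>k\<in>UNIV. Gamma (b$k) / of_real s powr (b$k) / Bt k) =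
            (\<Prod>k\<in>UNIV. Gamma (b$k) / Bt k) * (\<Prod>k\<in>UNIV. of_real s powr (- (b$k)))"
        unfolding prod.distrib[symmetric] by (intro prod.cong refl) (simp add: powr_minus divide_inverse mult_ac)
      also have "(\<Prod>k\<in>UNIV. (of_real s :: complex) powr (- (b$k))) = of_real s powr (- (\<Sum>k\<in>UNIV. b$k))"
        using sp by (simp add: powr_sum sum_negf[symmetric])
      finally have e1: "(\<Prod>k\<in>UNIV. Gamma (b$k) / of_real s powr (b$k) / Bt k) =
            (\<Prod>k\<in>UNIV. Gamma (b$k) / Bt k) * of_real s powr (- (\<Sum>k\<in>UNIV. b$k))" .
      have e2: "(of_real s :: complex) powr (a - 1) * of_real s powr (- (\<Sum>k\<in>UNIV. b$k)) = of_real s powr (al - 1)"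
        by (simp add: al_def powr_add[symmetric] algebra_simps)
      show ?thesis unfolding G0_def e1 C0_def e2[symmetric] by (simp add: field_simps)
    qed
    hence "(LINT s:{0<..}|lborel. G0 s) = (LINT s:{0<..}|lborel. C0 * (of_real s powr (al - 1) / of_real (exp s)))"
      by (intro set_lebesgue_integral_cong) auto
    also have "\<dots> = C0 * Gamma al" by (simp only: set_integral_mult_right Gamma_set_integral_lborel[OF al])
    also have "C0 = (\<Prod>k\<in>UNIV. Gamma (c$k) / Gamma (c$k - b$k)) / Gamma a"
      unfolding C0_def Bt_def using Gamma_over_Beta[OF bk] c by simp
    finally show ?thesis by (simp add: al_def)
  qed
  have limT: "((\<lambda>y::real^'n. (\<Prod>k\<in>UNIV. (complex_of_real (y$k)) powr (- (b$k))) *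
            LauricellaFA a b c (\<chi> k. 1 - 1 / complex_of_real (y$k)))
         \<longlongrightarrow> Gamma (a - (\<Sum>k\<in>UNIV. b$k)) / Gamma a *
               (\<Prod>k\<in>UNIV. Gamma (c$k) / Gamma (c$k - b$k))) (at 0 within T)"
  proof -
    have "eventually (\<lambda>y. (LINT s:{0<..}|lborel. G y s) = (\<Prod>k\<in>UNIV. (complex_of_real (y$k)) powr (- (b$k))) *
            LauricellaFA a b c (\<chi> k. 1 - 1 / complex_of_real (y$k))) (at 0 within T)"
      unfolding eventually_at_filter by (intro always_eventually allI impI V[symmetric]) auto
    from Lim_transform_eventually[OF lim[unfolded val] this] show ?thesis .
  qed
  show ?thesis
  proof (rule Lim_transform_within_set[OF limT])
    show "eventually (\<lambda>y. y \<in> T \<longleftrightarrow> y \<in> {y. \<forall>k. y$k > 0}) (at (0::real^'n))"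
      unfolding eventually_at
    proof (intro exI[of _ "1/2"] conjI ballI impI)
      show "(1/2::real) > 0" by simp
      fix y :: "real^'n" assume "y \<noteq> 0 \<and> dist y 0 < 1/2"
      hence "norm y < 1/2" by simp
      hence "y$k \<le> 1/2" for k using component_le_norm_cart[of y k] by linarith
      thus "y \<in> T \<longleftrightarrow> y \<in> {y. \<forall>k. y$k > 0}" by (auto simp: T_def)
    qed
  qed
qed


end
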